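(* Let $(W_n)_{n\in\omega}$ be a standard numbering of the c.e. subsets of $\omega$, $\langle\cdot,\cdot\rangle$ a computable pairing bijection, and $V_n=\{(i,j)\mid\langle i,j\rangle\in W_n\}$. Let $\mathbf{T}$, $\mathbf{P}$, $\mathbf{O}$ be the classes of all c.e. transitive relations, all c.e. preorders, and all c.e. partial orders on $\omega$, respectively. Then: (1) there is a computable function $t$ such that for all $m,n$: $V_{t(n)}\in\mathbf{T}$; $V_n\in\mathbf{T}$ implies $V_n=V_{t(n)}$; and $V_m=V_n$ implies $V_{t(m)}=V_{t(n)}$. (2) There is a computable function $p$ such that for all $m,n$: $V_{p(n)}\in\mathbf{P}$; $V_n\in\mathbf{P}$ implies $V_n=V_{p(n)}$; and $V_m=V_n$ implies $V_{p(m)}=V_{p(n)}$. (3) There is a computable function $o$ such that for all $n$: $V_{o(n)}\in\mathbf{O}$, and $V_n\in\mathbf{O}$ implies $V_n=V_{o(n)}$. *)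

theory Defs
  imports Main "HOL-Library.Nat_Bijection"
begin

text \<open>A concrete model of computation: general recursive function terms
  (no arities; argument lists of arbitrary length) with a partial,
  inductively defined evaluation relation.\<close>

datatype recf = Z | S | Id nat | Cn recf "recf list" | Pr recf recf | Mn recf

inductive eval :: "recf \<Rightarrow> nat list \<Rightarrow> nat \<Rightarrow> bool" where
  eval_Z: "eval Z xs 0"
| eval_S: "eval S (x # xs) (Suc x)"
| eval_Id: "i < length xs \<Longrightarrow> eval (Id i) xs (xs ! i)"
| eval_Cn: "list_all2 (\<lambda>g y. eval g xs y) gs ys \<Longrightarrow> eval f ys y \<Longrightarrow> eval (Cn f gs) xs y"
| eval_Pr0: "eval f xs y \<Longrightarrow> eval (Pr f g) (0 # xs) y"
| eval_PrS: "eval (Pr f g) (n # xs) y \<Longrightarrow> eval g (n # y # xs) z \<Longrightarrow> eval (Pr f g) (Suc n # xs) z"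
| eval_Mn: "eval f (n # xs) 0 \<Longrightarrow> (\<forall>m<n. \<exists>k>0. eval f (m # xs) k) \<Longrightarrow> eval (Mn f) xs n"
monos list.rel_mono

primrec code :: "recf \<Rightarrow> nat" where
  "code Z = prod_encode (0, 0)"
| "code S = prod_encode (1, 0)"
| "code (Id i) = prod_encode (2, i)"
| "code (Cn f gs) = prod_encode (3, prod_encode (code f, list_encode (map code gs)))"
| "code (Pr f g) = prod_encode (4, prod_encode (code f, code g))"
| "code (Mn f) = prod_encode (5, code f)"

definition computable :: "(nat \<Rightarrow> nat) \<Rightarrow> bool" where
  "computable t \<longleftrightarrow> (\<exists>c. \<forall>n. eval c [n] (t n))"

text \<open>Standard numbering of c.e. sets: W n is the domain of the unary
  function computed by the program with code n (empty if n codes nothing).\<close>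
definition W :: "nat \<Rightarrow> nat set" where
  "W n = {x. \<exists>c y. code c = n \<and> eval c [x] y}"

definition V :: "nat \<Rightarrow> (nat \<times> nat) set" where
  "V n = {(i, j). prod_encode (i, j) \<in> W n}"

definition ce_rel :: "(nat \<times> nat) set \<Rightarrow> bool" where
  "ce_rel R \<longleftrightarrow> (\<exists>n. R = V n)"

definition ceT :: "(nat \<times> nat) set set" where
  "ceT = {R. ce_rel R \<and> trans R}"

definition ceP :: "(nat \<times> nat) set set" where
  "ceP = {R. ce_rel R \<and> preorder_on UNIV R}"

definition ceO :: "(nat \<times> nat) set set" where
  "ceO = {R. ce_rel R \<and> partial_order_on UNIV R}"

end

theory Submission
  imports Defs
begin

inductive_cases evZ: "eval Z xs y"
inductive_cases evS: "eval S xs y"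
inductive_cases evId: "eval (Id i) xs y"
inductive_cases evCn: "eval (Cn f gs) xs y"
inductive_cases evPr: "eval (Pr f g) xs y"
inductive_cases evMn: "eval (Mn f) xs y"

lemma eval_det: "eval c xs y \<Longrightarrow> eval c xs y' \<Longrightarrow> y = y'"
proof (induction arbitrary: y' rule: eval.induct)
  case (eval_Z xs)
  then show ?case by (blast elim: evZ)
next
  case (eval_S x xs)
  then show ?case by (blast elim: evS)
next
  case (eval_Id i xs)
  then show ?case by (blast elim: evId)
next
  case (eval_Cn xs gs ys f y)
  from eval_Cn.prems obtain ys' where a: "list_all2 (\<lambda>g y. eval g xs y) gs ys'" and b: "eval f ys' y'"
    by (blast elim: evCn)
  have "ys = ys'" using eval_Cn.IH(1) a
  proof (induction arbitrary: ys' rule: list_all2_induct)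
    case Nil then show ?case by simp
  next
    case (Cons g gs y ys)
    then show ?case by (cases ys') auto
  qed
  then show ?case using eval_Cn.IH(2) b by blast
next
  case (eval_Pr0 f xs y g)
  from eval_Pr0.prems show ?case
  proof (rule evPr)
    fix xs' assume "0 # xs = 0 # xs'" "eval f xs' y'"
    then show ?thesis using eval_Pr0.IH by simp
  qed simp
next
  case (eval_PrS f g n xs y z)
  from eval_PrS.prems show ?case
  proof (rule evPr)
    fix n' xs' y'' assume h: "Suc n # xs = Suc n' # xs'"
      "eval (Pr f g) (n' # xs') y''" "eval g (n' # y'' # xs') y'"
    then have "y = y''" using eval_PrS.IH(1) by simp
    then show ?thesis using h eval_PrS.IH(2) by simp
  qed simp
next
  case (eval_Mn f n xs)
  from eval_Mn.prems obtain n' where n': "y' = n'" "eval f (n' # xs) 0" "\<forall>m<n'. \<exists>k>0. eval f (m # xs) k"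
    by (blast elim: evMn)
  show ?case
  proof (rule ccontr)
    assume "n \<noteq> y'"
    then consider "n < n'" | "n' < n" using n' by linarith
    then show False
    proof cases
      case 1 then obtain k where "k > 0" "eval f (n # xs) k" using n' by blast
      then have "0 = k" using eval_Mn.IH(1) by blast
      then show False using \<open>k > 0\<close> by simp
    next
      case 2 then obtain k where "k > 0" "eval f (n' # xs) k" "\<forall>y'. eval f (n' # xs) y' \<longrightarrow> k = y'"
        using eval_Mn.IH(2) by blast
      then have "k = 0" using n' by blast
      then show False using \<open>k > 0\<close> by simp
    qed
  qed
qed

definition nth0 :: "nat list \<Rightarrow> nat \<Rightarrow> nat" where
  "nth0 xs i = (if i < length xs then xs ! i else 0)"

lemma nth0_drop[simp]: "nth0 (drop d xs) i = nth0 xs (d + i)"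
  by (auto simp: nth0_def add.commute)

lemma nth0_Cons_0[simp]: "nth0 (x # xs) 0 = x" by (simp add: nth0_def)
lemma nth0_Cons_Suc[simp]: "nth0 (x # xs) (Suc i) = nth0 xs i" by (simp add: nth0_def)

primrec K :: "nat \<Rightarrow> recf" where
  "K 0 = Z"
| "K (Suc n) = Cn S [K n]"

lemma eval_K: "eval (K n) xs n"
proof (induction n)
  case 0 then show ?case by (simp add: eval_Z)
next
  case (Suc n)
  have l: "list_all2 (\<lambda>g y. eval g xs y) [K n] [n]" using Suc by simp
  have e: "eval S [n] (Suc n)" by (rule eval_S)
  show ?case by (simp, rule eval_Cn[OF l e])
qed

definition rc :: "nat \<Rightarrow> (nat list \<Rightarrow> nat) \<Rightarrow> bool" where
  "rc k f \<longleftrightarrow> (\<exists>c. \<forall>xs. length xs = k \<longrightarrow> eval c xs (f xs))"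

lemma rc_cong: "rc k f \<Longrightarrow> (\<And>xs. length xs = k \<Longrightarrow> f xs = g xs) \<Longrightarrow> rc k g"
  unfolding rc_def by metis

lemma rc_const: "rc k (\<lambda>xs. c)"
  unfolding rc_def using eval_K by blast

lemma rc_nth0: "rc k (\<lambda>xs. nth0 xs i)"
proof (cases "i < k")
  case True
  then show ?thesis unfolding rc_def
    by (intro exI[of _ "Id i"]) (auto simp: nth0_def intro: eval_Id)
next
  case False
  then show ?thesis unfolding rc_def
    by (intro exI[of _ "K 0"]) (auto simp: nth0_def intro: eval_K[of 0, simplified])
qed

lemma rc_Suc: "rc k f \<Longrightarrow> rc k (\<lambda>xs. Suc (f xs))"
  unfolding rc_def
proof (elim exE, intro exI allI impI)
  fix c and xs :: "nat list" assume c: "\<forall>xs. length xs = k \<longrightarrow> eval c xs (f xs)" and l: "length xs = k"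
  have "list_all2 (\<lambda>g y. eval g xs y) [c] [f xs]" using c l by simp
  moreover have "eval S [f xs] (Suc (f xs))" by (rule eval_S)
  ultimately show "eval (Cn S [c]) xs (Suc (f xs))" by (rule eval_Cn)
qed

lemma progs_exist:
  assumes "\<forall>g\<in>set gs. rc k g"
  shows "\<exists>cs. list_all2 (\<lambda>c g. \<forall>xs::nat list. length xs = k \<longrightarrow> eval c xs (g xs)) cs gs"
  using assms
proof (induction gs)
  case Nil then show ?case by simp
next
  case (Cons g gs)
  then obtain cs where "list_all2 (\<lambda>c g. \<forall>xs. length xs = k \<longrightarrow> eval c xs (g xs)) cs gs" by auto
  moreover obtain c where "\<forall>xs. length xs = k \<longrightarrow> eval c xs (g xs)" using Cons.prems unfolding rc_def by auto
  ultimately show ?case by (intro exI[of _ "c # cs"]) simp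
qed

lemma rc_compose:
  assumes h: "rc m h" and gs: "\<forall>g\<in>set gs. rc k g" and len: "length gs = m"
  shows "rc k (\<lambda>xs. h (map (\<lambda>g. g xs) gs))"
proof -
  obtain ch where ch: "\<forall>xs. length xs = m \<longrightarrow> eval ch xs (h xs)" using h unfolding rc_def by auto
  obtain cs where cs: "list_all2 (\<lambda>c g. \<forall>xs. length xs = k \<longrightarrow> eval c xs (g xs)) cs gs"
    using progs_exist[OF gs] by auto
  show ?thesis unfolding rc_def
  proof (intro exI allI impI)
    fix xs :: "nat list" assume l: "length xs = k"
    have "list_all2 (\<lambda>c y. eval c xs y) cs (map (\<lambda>g. g xs) gs)"
      using cs l by (induction rule: list_all2_induct) auto
    moreover have "eval ch (map (\<lambda>g. g xs) gs) (h (map (\<lambda>g. g xs) gs))" using ch len by simp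
    ultimately show "eval (Cn ch cs) xs (h (map (\<lambda>g. g xs) gs))" by (rule eval_Cn)
  qed
qed

lemma map_nth0_upt: "length xs = d + k \<Longrightarrow> map (\<lambda>i. nth0 xs (d + i)) [0..<k] = drop d xs"
  by (rule nth_equalityI) (auto simp: nth0_def add.commute)

lemma rc_shift: assumes "rc k f" shows "rc (d + k) (\<lambda>ys. f (drop d ys))"
proof -
  have "rc (d + k) (\<lambda>ys. f (map (\<lambda>g. g ys) (map (\<lambda>i ys. nth0 ys (d + i)) [0..<k])))"
    by (rule rc_compose[OF assms]) (auto simp: rc_nth0)
  then show ?thesis
    by (rule rc_cong) (simp add: o_def map_nth0_upt)
qed

lemma rc_rec:
  assumes n: "rc k n" and f: "rc k f" and g: "rc (Suc (Suc k)) (\<lambda>ys. g (nth0 ys 0) (nth0 ys 1) (drop 2 ys))"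
  shows "rc k (\<lambda>xs. rec_nat (f xs) (\<lambda>m r. g m r xs) (n xs))"
proof -
  obtain cf where cf: "\<forall>xs. length xs = k \<longrightarrow> eval cf xs (f xs)" using f unfolding rc_def by auto
  obtain cg where cg: "\<forall>ys. length ys = Suc (Suc k) \<longrightarrow> eval cg ys (g (nth0 ys 0) (nth0 ys 1) (drop 2 ys))"
    using g unfolding rc_def by auto
  have ev: "eval (Pr cf cg) (m # xs) (rec_nat (f xs) (\<lambda>m r. g m r xs) m)" if l: "length xs = k" for m xs
  proof (induction m)
    case 0 then show ?case using cf l by (simp add: eval_Pr0)
  next
    case (Suc m)
    have "eval cg (m # rec_nat (f xs) (\<lambda>m r. g m r xs) m # xs) (g m (rec_nat (f xs) (\<lambda>m r. g m r xs) m) xs)"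
      using cg[rule_format, of "m # rec_nat (f xs) (\<lambda>m r. g m r xs) m # xs"] l by simp
    then show ?case using Suc by (simp add: eval_PrS)
  qed
  have R: "rc (Suc k) (\<lambda>ys. rec_nat (f (drop 1 ys)) (\<lambda>m r. g m r (drop 1 ys)) (nth0 ys 0))"
    unfolding rc_def
  proof (intro exI allI impI)
    fix ys :: "nat list" assume "length ys = Suc k"
    then obtain m xs where "ys = m # xs" "length xs = k" by (cases ys) auto
    then show "eval (Pr cf cg) ys (rec_nat (f (drop 1 ys)) (\<lambda>m r. g m r (drop 1 ys)) (nth0 ys 0))"
      using ev by simp
  qed
  have "rc k (\<lambda>xs. (\<lambda>ys. rec_nat (f (drop 1 ys)) (\<lambda>m r. g m r (drop 1 ys)) (nth0 ys 0))
            (map (\<lambda>g. g xs) (n # map (\<lambda>i xs. nth0 xs (0 + i)) [0..<k])))"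
    by (rule rc_compose[OF R]) (auto simp: n rc_nth0)
  then show ?thesis
    by (rule rc_cong) (simp add: o_def map_nth0_upt[where d=0, simplified])
qed

lemma rc_pred: "rc k a \<Longrightarrow> rc k (\<lambda>xs. a xs - 1)"
proof -
  assume a: "rc k a"
  have "rc k (\<lambda>xs. rec_nat 0 (\<lambda>m r. m) (a xs))"
    by (rule rc_rec[OF a rc_const]) (simp add: rc_nth0)
  then show ?thesis by (rule rc_cong) (case_tac "a xs", auto)
qed

lemma rc_add: "rc k a \<Longrightarrow> rc k b \<Longrightarrow> rc k (\<lambda>xs. a xs + b xs)"
proof -
  assume a: "rc k a" and b: "rc k b"
  have "rc k (\<lambda>xs. rec_nat (a xs) (\<lambda>m r. Suc r) (b xs))"
    by (rule rc_rec[OF b a]) (intro rc_nth0 rc_Suc)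
  moreover have "rec_nat x (\<lambda>m r. Suc r) y = x + y" for x y :: nat by (induction y) auto
  ultimately show ?thesis by (rule rc_cong)
qed

lemma rc_sub: "rc k a \<Longrightarrow> rc k b \<Longrightarrow> rc k (\<lambda>xs. a xs - b xs)"
proof -
  assume a: "rc k a" and b: "rc k b"
  have "rc k (\<lambda>xs. rec_nat (a xs) (\<lambda>m r. r - 1) (b xs))"
    by (rule rc_rec[OF b a]) (intro rc_nth0 rc_pred)
  moreover have "rec_nat x (\<lambda>m r. r - 1) y = x - y" for x y :: nat by (induction y) auto
  ultimately show ?thesis by (rule rc_cong)
qed

lemma rc_mult: "rc k a \<Longrightarrow> rc k b \<Longrightarrow> rc k (\<lambda>xs. a xs * b xs)"
proof -
  assume a: "rc k a" and b: "rc k b"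
  have "rc k (\<lambda>xs. rec_nat 0 (\<lambda>m r. r + a xs) (b xs))"
    by (rule rc_rec[OF b rc_const]) (intro rc_add rc_nth0 rc_shift[OF a, where d=2, simplified])
  moreover have "rec_nat 0 (\<lambda>m r. r + x) y = x * y" for x y :: nat by (induction y) auto
  ultimately show ?thesis by (rule rc_cong)
qed

definition rcp :: "nat \<Rightarrow> (nat list \<Rightarrow> bool) \<Rightarrow> bool" where
  "rcp k P \<longleftrightarrow> rc k (\<lambda>xs. if P xs then 1 else 0)"

lemma rc_if: "rcp k P \<Longrightarrow> rc k f \<Longrightarrow> rc k g \<Longrightarrow> rc k (\<lambda>xs. if P xs then f xs else g xs)"
proof -
  assume P: "rcp k P" and f: "rc k f" and g: "rc k g"
  have "rc k (\<lambda>xs. rec_nat (g xs) (\<lambda>m r. f xs) (if P xs then 1 else 0))"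
    by (rule rc_rec[OF P[unfolded rcp_def] g]) (rule rc_shift[OF f, where d=2, simplified])
  then show ?thesis by (rule rc_cong) simp
qed

lemma rcp_const: "rcp k (\<lambda>xs. P)"
  unfolding rcp_def by (rule rc_const)

lemma rcp_zero: "rc k a \<Longrightarrow> rcp k (\<lambda>xs. a xs = 0)"
  unfolding rcp_def
  by (rule rc_cong[OF rc_sub[OF rc_const[of k 1]]]) auto

lemma rcp_not: "rcp k P \<Longrightarrow> rcp k (\<lambda>xs. \<not> P xs)"
  unfolding rcp_def
  by (rule rc_cong[OF rc_sub[OF rc_const[of k 1]]]) auto

lemma rcp_and: "rcp k P \<Longrightarrow> rcp k Q \<Longrightarrow> rcp k (\<lambda>xs. P xs \<and> Q xs)"
  unfolding rcp_def
  by (rule rc_cong, erule (1) rc_mult) auto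

lemma rcp_or: "rcp k P \<Longrightarrow> rcp k Q \<Longrightarrow> rcp k (\<lambda>xs. P xs \<or> Q xs)"
proof -
  assume "rcp k P" "rcp k Q"
  then have "rcp k (\<lambda>xs. \<not> (\<not> P xs \<and> \<not> Q xs))" by (intro rcp_not rcp_and)
  then show ?thesis by simp
qed

lemma rcp_imp: "rcp k P \<Longrightarrow> rcp k Q \<Longrightarrow> rcp k (\<lambda>xs. P xs \<longrightarrow> Q xs)"
proof -
  assume "rcp k P" "rcp k Q"
  then have "rcp k (\<lambda>xs. \<not> P xs \<or> Q xs)" by (intro rcp_not rcp_or)
  then show ?thesis by simp
qed

lemma rcp_le: "rc k a \<Longrightarrow> rc k b \<Longrightarrow> rcp k (\<lambda>xs. a xs \<le> b xs)"
proof -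
  assume "rc k a" "rc k b"
  then have "rcp k (\<lambda>xs. a xs - b xs = 0)" by (intro rcp_zero rc_sub)
  then show ?thesis by simp
qed

lemma rcp_less: "rc k a \<Longrightarrow> rc k b \<Longrightarrow> rcp k (\<lambda>xs. a xs < b xs)"
proof -
  assume "rc k a" "rc k b"
  then have "rcp k (\<lambda>xs. Suc (a xs) \<le> b xs)" by (intro rcp_le rc_Suc)
  then show ?thesis by (simp add: Suc_le_eq)
qed

lemma rcp_eq: "rc k a \<Longrightarrow> rc k b \<Longrightarrow> rcp k (\<lambda>xs. a xs = b xs)"
proof -
  assume "rc k a" "rc k b"
  then have "rcp k (\<lambda>xs. a xs \<le> b xs \<and> b xs \<le> a xs)" by (intro rcp_le rcp_and)
  then show ?thesis by (simp add: eq_iff)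
qed

lemma rc_sum:
  assumes b: "rc k b" and f: "rc (Suc k) (\<lambda>ys. f (nth0 ys 0) (drop 1 ys))"
  shows "rc k (\<lambda>xs. \<Sum>e<b xs. f e xs)"
proof -
  have f2: "rc (Suc (Suc k)) (\<lambda>ys. f (nth0 ys 0) (drop 2 ys))"
  proof -
    have "rc (Suc (Suc k)) (\<lambda>ys. (\<lambda>ys. f (nth0 ys 0) (drop 1 ys))
       (map (\<lambda>g. g ys) ((\<lambda>ys. nth0 ys 0) # map (\<lambda>i ys. nth0 ys (2 + i)) [0..<k])))"
      by (rule rc_compose[OF f]) (auto simp: rc_nth0)
    then show ?thesis
      apply (rule rc_cong)
      apply (simp add: o_def)
      apply (rule arg_cong[where f="f _"])
      apply (rule nth_equalityI)
       apply (auto simp: nth0_def)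
      done
  qed
  have "rc k (\<lambda>xs. rec_nat 0 (\<lambda>m r. r + f m xs) (b xs))"
    by (rule rc_rec[OF b rc_const]) (rule rc_add[OF rc_nth0 f2])
  moreover have "rec_nat 0 (\<lambda>m r. r + f m x) y = (\<Sum>e<y. f e x)" for x y by (induction y) auto
  ultimately show ?thesis by (rule rc_cong)
qed

lemma rcp_ex:
  assumes b: "rc k b" and P: "rcp (Suc k) (\<lambda>ys. P (nth0 ys 0) (drop 1 ys))"
  shows "rcp k (\<lambda>xs. \<exists>e<b xs. P e xs)"
proof -
  have "rc k (\<lambda>xs. \<Sum>e<b xs. if P e xs then 1 else 0)"
    by (rule rc_sum[OF b P[unfolded rcp_def]])
  then have "rcp k (\<lambda>xs. \<not> (\<Sum>e<b xs. if P e xs then 1 else 0) = (0::nat))"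
    by (intro rcp_not rcp_zero)
  moreover have "(\<Sum>e<y. if Q e then 1 else 0) = (0::nat) \<longleftrightarrow> \<not> (\<exists>e<y. Q e)" for y :: nat and Q
    by (induction y) (auto simp: less_Suc_eq)
  ultimately show ?thesis by simp
qed

lemma rcp_all:
  assumes b: "rc k b" and P: "rcp (Suc k) (\<lambda>ys. P (nth0 ys 0) (drop 1 ys))"
  shows "rcp k (\<lambda>xs. \<forall>e<b xs. P e xs)"
proof -
  have "rcp k (\<lambda>xs. \<not> (\<exists>e<b xs. \<not> P e xs))"
    by (intro rcp_not rcp_ex[OF b] rcp_not[OF P])
  then show ?thesis by simp
qed

lemma rc_un: "rc 1 (\<lambda>ys. h (nth0 ys 0)) \<Longrightarrow> rc k a \<Longrightarrow> rc k (\<lambda>xs. h (a xs))"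
  by (drule rc_compose[where gs="[a]" and k=k]) auto

lemma rc_bin: "rc 2 (\<lambda>ys. h (nth0 ys 0) (nth0 ys 1)) \<Longrightarrow> rc k a \<Longrightarrow> rc k b \<Longrightarrow> rc k (\<lambda>xs. h (a xs) (b xs))"
  by (drule rc_compose[where gs="[a,b]" and k=k]) auto

lemma rc_tri: "rc 3 (\<lambda>ys. h (nth0 ys 0) (nth0 ys 1) (nth0 ys 2)) \<Longrightarrow> rc k a \<Longrightarrow> rc k b \<Longrightarrow> rc k c \<Longrightarrow>
   rc k (\<lambda>xs. h (a xs) (b xs) (c xs))"
  by (drule rc_compose[where gs="[a,b,c]" and k=k]) (auto simp: numeral_3_eq_3 nth0_def)

lemma rcp_un: "rcp 1 (\<lambda>ys. h (nth0 ys 0)) \<Longrightarrow> rc k a \<Longrightarrow> rcp k (\<lambda>xs. h (a xs))"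
  unfolding rcp_def by (rule rc_un[where h="\<lambda>x. if h x then 1 else 0"])
lemma rcp_bin: "rcp 2 (\<lambda>ys. h (nth0 ys 0) (nth0 ys 1)) \<Longrightarrow> rc k a \<Longrightarrow> rc k b \<Longrightarrow> rcp k (\<lambda>xs. h (a xs) (b xs))"
  unfolding rcp_def by (rule rc_bin[where h="\<lambda>x y. if h x y then 1 else 0"])
lemma rcp_tri: "rcp 3 (\<lambda>ys. h (nth0 ys 0) (nth0 ys 1) (nth0 ys 2)) \<Longrightarrow> rc k a \<Longrightarrow> rc k b \<Longrightarrow> rc k c \<Longrightarrow>
   rcp k (\<lambda>xs. h (a xs) (b xs) (c xs))"
  unfolding rcp_def by (rule rc_tri[where h="\<lambda>x y z. if h x y z then 1 else 0"])

lemmas rc_basic = rc_const rc_nth0 rc_Suc rc_add rc_sub rc_mult rc_if rc_sum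
  rcp_const rcp_zero rcp_not rcp_and rcp_or rcp_imp rcp_le rcp_less rcp_eq rcp_ex rcp_all


definition pe :: "nat \<Rightarrow> nat \<Rightarrow> nat" where "pe a b = prod_encode (a, b)"

lemma rc_triangle: "rc k a \<Longrightarrow> rc k (\<lambda>xs. triangle (a xs))"
proof -
  assume a: "rc k a"
  have "rc k (\<lambda>xs. rec_nat 0 (\<lambda>m r. r + Suc m) (a xs))"
    by (rule rc_rec[OF a rc_const]) (rule rc_basic | simp only: nth0_drop drop_drop)+
  moreover have "rec_nat 0 (\<lambda>m r. r + Suc m) y = triangle y" for y by (induction y) auto
  ultimately show ?thesis by (rule rc_cong)
qed

lemma rc_pe: "rc k a \<Longrightarrow> rc k b \<Longrightarrow> rc k (\<lambda>xs. pe (a xs) (b xs))"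
proof -
  assume a: "rc k a" and b: "rc k b"
  have "rc k (\<lambda>xs. triangle (a xs + b xs) + a xs)" by (rule rc_triangle rc_basic a b | simp only: nth0_drop drop_drop)+
  then show ?thesis by (simp add: pe_def prod_encode_def)
qed

definition pfst :: "nat \<Rightarrow> nat" where "pfst z = fst (prod_decode z)"
definition psnd :: "nat \<Rightarrow> nat" where "psnd z = snd (prod_decode z)"

lemma pfst_pe[simp]: "pfst (pe a b) = a" and psnd_pe[simp]: "psnd (pe a b) = b"
  by (simp_all add: pfst_def psnd_def pe_def)

lemma pe_pfst_psnd[simp]: "pe (pfst z) (psnd z) = z"
  by (simp add: pfst_def psnd_def pe_def)

lemma pe_eq[simp]: "pe a b = pe c d \<longleftrightarrow> a = c \<and> b = d"
  by (simp add: pe_def)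

lemma pe_ge1: "a \<le> pe a b" and pe_ge2: "b \<le> pe a b"
  by (simp_all add: pe_def le_prod_encode_1 le_prod_encode_2)

lemma pfst_le: "pfst z \<le> z" and psnd_le: "psnd z \<le> z"
  by (metis pe_ge1 pe_pfst_psnd, metis pe_ge2 pe_pfst_psnd)

lemma pe_mono: "a \<le> a' \<Longrightarrow> b \<le> b' \<Longrightarrow> pe a b \<le> pe a' b'"
proof -
  assume "a \<le> a'" "b \<le> b'"
  moreover have "triangle x \<le> triangle y" if "x \<le> y" for x y
    using that by (induction y) (auto simp: le_Suc_eq)
  ultimately show ?thesis by (simp add: pe_def prod_encode_def add_mono)
qed

lemma pfst_sum: "pfst z = (\<Sum>a<Suc z. if (\<exists>b<Suc z. pe a b = z) then a else 0)"
proof -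
  have "(\<exists>b<Suc z. pe a b = z) \<longleftrightarrow> a = pfst z" for a
    using psnd_le[of z] by (auto simp: less_Suc_eq_le)
  then have "(\<Sum>a<Suc z. if (\<exists>b<Suc z. pe a b = z) then a else 0) = (\<Sum>a<Suc z. if a = pfst z then a else 0)"
    by simp
  also have "\<dots> = pfst z" using pfst_le[of z] by (simp add: sum.delta')
  finally show ?thesis by simp
qed

lemma psnd_sum: "psnd z = (\<Sum>b<Suc z. if (\<exists>a<Suc z. pe a b = z) then b else 0)"
proof -
  have "(\<exists>a<Suc z. pe a b = z) \<longleftrightarrow> b = psnd z" for b
    using pfst_le[of z] by (auto simp: less_Suc_eq_le)
  then have "(\<Sum>b<Suc z. if (\<exists>a<Suc z. pe a b = z) then b else 0) = (\<Sum>b<Suc z. if b = psnd z then b else 0)"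
    by simp
  also have "\<dots> = psnd z" using psnd_le[of z] by (simp add: sum.delta')
  finally show ?thesis by simp
qed

lemma rc_pfst: assumes "rc k a" shows "rc k (\<lambda>xs. pfst (a xs))"
proof -
  have "rc 1 (\<lambda>ys. pfst (nth0 ys 0))" unfolding pfst_sum by (rule rc_pe rc_basic | simp only: nth0_drop drop_drop)+
  from rc_un[where h=pfst, OF this assms] show ?thesis .
qed

lemma rc_psnd: assumes "rc k a" shows "rc k (\<lambda>xs. psnd (a xs))"
proof -
  have "rc 1 (\<lambda>ys. psnd (nth0 ys 0))" unfolding psnd_sum by (rule rc_pe rc_basic | simp only: nth0_drop drop_drop)+
  from rc_un[where h=psnd, OF this assms] show ?thesis .
qed

definition cons :: "nat \<Rightarrow> nat \<Rightarrow> nat" where "cons a z = Suc (pe a z)"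
definition tlc :: "nat \<Rightarrow> nat" where "tlc z = psnd (z - 1)"
definition hdc :: "nat \<Rightarrow> nat" where "hdc z = pfst (z - 1)"
definition itl :: "nat \<Rightarrow> nat \<Rightarrow> nat" where "itl k z = (tlc ^^ k) z"
definition nthc :: "nat \<Rightarrow> nat \<Rightarrow> nat" where "nthc z i = hdc (itl i z)"
definition lenc :: "nat \<Rightarrow> nat" where "lenc z = (\<Sum>k<z. if itl k z = 0 then 0 else 1)"

lemma list_encode_Cons: "list_encode (a # L) = cons a (list_encode L)"
  by (simp add: cons_def pe_def)

declare list_encode.simps(2)[simp del]
declare list_encode_Cons[simp]

lemma tlc_cons[simp]: "tlc (cons a z) = z" and hdc_cons[simp]: "hdc (cons a z) = a"
  by (simp_all add: tlc_def hdc_def cons_def)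

lemma tlc_list: "tlc (list_encode M) = list_encode (tl M)"
proof (cases M)
  case Nil
  have "prod_decode 0 = (0, 0)" by (simp add: prod_decode_def prod_decode_aux.simps)
  then show ?thesis using Nil by (simp add: tlc_def psnd_def)
next
  case (Cons a L) then show ?thesis by (simp add: list_encode_Cons)
qed

lemma itl_list: "itl k (list_encode L) = list_encode (drop k L)"
  by (induction k) (auto simp: itl_def tlc_list drop_Suc tl_drop)

lemma nthc_list: "i < length L \<Longrightarrow> nthc (list_encode L) i = L ! i"
  by (simp add: nthc_def itl_list Cons_nth_drop_Suc[symmetric] list_encode_Cons)

lemma length_le_list_encode: "length L \<le> list_encode L"
  by (induction L) (auto simp: list_encode_Cons cons_def intro: order_trans[OF _ pe_ge2])

lemma set_less_list_encode: "x \<in> set L \<Longrightarrow> x < list_encode L"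
proof (induction L)
  case (Cons a L)
  have "a \<le> pe a (list_encode L)" "list_encode L \<le> pe a (list_encode L)" by (rule pe_ge1, rule pe_ge2)
  then show ?case using Cons by (auto simp: cons_def)
qed simp

lemma lenc_list: "lenc (list_encode L) = length L"
proof -
  have "itl k (list_encode L) = 0 \<longleftrightarrow> length L \<le> k" for k
  proof -
    have "list_encode (drop k L) = 0 \<longleftrightarrow> drop k L = []"
      by (metis list_encode.simps(1) list_encode_eq)
    then show ?thesis by (simp add: itl_list)
  qed
  then have "lenc (list_encode L) = (\<Sum>k<list_encode L. if k < length L then 1 else 0)"
    by (auto simp: lenc_def intro!: sum.cong)
  also have "\<dots> = card {k. k < list_encode L \<and> k < length L}"
    by (simp add: sum.If_cases lessThan_def Collect_conj_eq Int_commute)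
  also have "{k. k < list_encode L \<and> k < length L} = {..<length L}"
    using length_le_list_encode[of L] by auto
  finally show ?thesis by simp
qed

lemma nthc_le: "nthc z i \<le> z"
proof -
  have "tlc x \<le> x" for x by (simp add: tlc_def) (metis diff_le_self le_trans psnd_le)
  then have "itl i z \<le> z" by (induction i) (auto simp: itl_def intro: le_trans)
  moreover have "hdc x \<le> x" for x by (simp add: hdc_def) (metis diff_le_self le_trans pfst_le)
  ultimately show ?thesis by (metis nthc_def le_trans)
qed

lemma rc_cons: "rc k a \<Longrightarrow> rc k b \<Longrightarrow> rc k (\<lambda>xs. cons (a xs) (b xs))"
  unfolding cons_def by (rule rc_Suc rc_pe | assumption)+

lemma rc_tlc: "rc k a \<Longrightarrow> rc k (\<lambda>xs. tlc (a xs))"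
  unfolding tlc_def by (rule rc_psnd rc_sub rc_const | assumption)+

lemma rc_hdc: "rc k a \<Longrightarrow> rc k (\<lambda>xs. hdc (a xs))"
  unfolding hdc_def by (rule rc_pfst rc_sub rc_const | assumption)+

lemma rc_itl: assumes a: "rc k a" and b: "rc k b" shows "rc k (\<lambda>xs. itl (a xs) (b xs))"
proof -
  have "rc k (\<lambda>xs. rec_nat (b xs) (\<lambda>m r. tlc r) (a xs))"
    by (rule rc_rec[OF a b]) (rule rc_tlc rc_nth0)+
  moreover have "rec_nat z (\<lambda>m r. tlc r) y = itl y z" for y z by (induction y) (auto simp: itl_def)
  ultimately show ?thesis by (rule rc_cong)
qed

lemma rc_nthc: "rc k a \<Longrightarrow> rc k b \<Longrightarrow> rc k (\<lambda>xs. nthc (a xs) (b xs))"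
  unfolding nthc_def by (rule rc_hdc rc_itl | assumption)+

lemma rc_lenc: assumes a: "rc k a" shows "rc k (\<lambda>xs. lenc (a xs))"
proof -
  have "rc 1 (\<lambda>ys. lenc (nth0 ys 0))" unfolding lenc_def
    by (rule rc_itl rc_basic | simp only: nth0_drop drop_drop)+
  from rc_un[where h=lenc, OF this a] show ?thesis .
qed

lemmas rc_all = rc_basic rc_pe rc_pfst rc_psnd rc_cons rc_tlc rc_hdc rc_itl rc_nthc rc_lenc

definition fct :: "nat \<Rightarrow> nat \<Rightarrow> nat \<Rightarrow> nat" where "fct p x y = pe p (pe x y)"
definition fp :: "nat \<Rightarrow> nat" where "fp f = pfst f"
definition fx :: "nat \<Rightarrow> nat" where "fx f = pfst (psnd f)"
definition fy :: "nat \<Rightarrow> nat" where "fy f = psnd (psnd f)"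

lemma fact_simps[simp]: "fp (fct p x y) = p" "fx (fct p x y) = x" "fy (fct p x y) = y"
  by (simp_all add: fct_def fp_def fx_def fy_def)

lemma fact_eta: "fct (fp f) (fx f) (fy f) = f"
  by (simp add: fct_def fp_def fx_def fy_def)

lemma rc_fp: "rc k a \<Longrightarrow> rc k (\<lambda>xs. fp (a xs))" unfolding fp_def by (rule rc_pfst)
lemma rc_fx: "rc k a \<Longrightarrow> rc k (\<lambda>xs. fx (a xs))" unfolding fx_def by (rule rc_pfst rc_psnd | assumption)+
lemma rc_fy: "rc k a \<Longrightarrow> rc k (\<lambda>xs. fy (a xs))" unfolding fy_def by (rule rc_psnd | assumption)+

lemmas rc_all2 = rc_all rc_fp rc_fx rc_fy

lemma code_pe: "code Z = pe 0 0" "code S = pe 1 0" "code (Id i) = pe 2 i"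
  "code (Cn f gs) = pe 3 (pe (code f) (list_encode (map code gs)))"
  "code (Pr f g) = pe 4 (pe (code f) (code g))" "code (Mn f) = pe 5 (code f)"
  by (simp_all add: pe_def)

declare code.simps[simp del]

lemma code_inj: "code a = code b \<Longrightarrow> a = b"
proof (induction a arbitrary: b)
  case Z then show ?case by (cases b) (auto simp: code_pe)
next
  case S then show ?case by (cases b) (auto simp: code_pe)
next
  case (Id i) then show ?case by (cases b) (auto simp: code_pe)
next
  case (Cn f gs)
  show ?case
  proof (cases b)
    case (Cn f' gs')
    with Cn.prems have 1: "code f = code f'" and 2: "list_encode (map code gs) = list_encode (map code gs')"
      by (auto simp: code_pe)
    from 2 have "map code gs = map code gs'" by (simp add: list_encode_eq)
    then have "gs = gs'" using Cn.IH(2)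
    proof (induction gs arbitrary: gs')
      case Nil then show ?case by simp
    next
      case (Cons g gs) then show ?case by (cases gs') auto
    qed
    then show ?thesis using Cn.IH(1) 1 \<open>b = Cn f' gs'\<close> by auto
  qed (use Cn.prems in \<open>auto simp: code_pe\<close>)
next
  case (Pr f g) then show ?case by (cases b) (auto simp: code_pe)
next
  case (Mn f) then show ?case by (cases b) (auto simp: code_pe)
qed

definition jZ :: "nat \<Rightarrow> bool" where "jZ f \<longleftrightarrow> (pfst (fp f) = 0 \<and> psnd (fp f) = 0 \<and> fy f = 0)"
definition jS :: "nat \<Rightarrow> bool" where "jS f \<longleftrightarrow> (pfst (fp f) = 1 \<and> psnd (fp f) = 0 \<and> 0 < lenc (fx f) \<and> fy f = Suc (nthc (fx f) 0))"
definition jI :: "nat \<Rightarrow> bool" where "jI f \<longleftrightarrow> (pfst (fp f) = 2 \<and> psnd (fp f) < lenc (fx f) \<and> fy f = nthc (fx f) (psnd (fp f)))"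
definition jC :: "(nat \<Rightarrow> bool) \<Rightarrow> nat \<Rightarrow> bool" where "jC A f \<longleftrightarrow> (pfst (fp f) = 3 \<and> (\<exists>g. A g \<and> fp g = pfst (psnd (fp f)) \<and> fy g = fy f \<and> lenc (fx g) = lenc (psnd (psnd (fp f))) \<and> (\<forall>k<lenc (psnd (psnd (fp f))). \<exists>h. A h \<and> fp h = nthc (psnd (psnd (fp f))) k \<and> fx h = fx f \<and> fy h = nthc (fx g) k)))"
definition jP0 :: "(nat \<Rightarrow> bool) \<Rightarrow> (nat \<Rightarrow> bool) \<Rightarrow> nat \<Rightarrow> bool" where "jP0 A C f \<longleftrightarrow> (pfst (fp f) = 4 \<and> 0 < lenc (fx f) \<and> nthc (fx f) 0 = 0 \<and> (\<exists>g. A g \<and> fp g = pfst (psnd (fp f)) \<and> fx g = tlc (fx f) \<and> fy g = fy f) \<and> C (fp f))"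
definition jPS :: "(nat \<Rightarrow> bool) \<Rightarrow> nat \<Rightarrow> bool" where "jPS A f \<longleftrightarrow> (pfst (fp f) = 4 \<and> 0 < lenc (fx f) \<and> 0 < nthc (fx f) 0 \<and> (\<exists>g. A g \<and> (\<exists>h. A h \<and> fp g = fp f \<and> fx g = cons (nthc (fx f) 0 - 1) (tlc (fx f)) \<and> fp h = psnd (psnd (fp f)) \<and> fx h = cons (nthc (fx f) 0 - 1) (cons (fy g) (tlc (fx f))) \<and> fy h = fy f)))"
definition jM :: "(nat \<Rightarrow> bool) \<Rightarrow> nat \<Rightarrow> bool" where "jM A f \<longleftrightarrow> (pfst (fp f) = 5 \<and> (\<exists>g. A g \<and> fp g = psnd (fp f) \<and> fx g = cons (fy f) (fx f) \<and> fy g = 0) \<and> (\<forall>m<fy f. \<exists>g. A g \<and> fp g = psnd (fp f) \<and> fx g = cons m (fx f) \<and> 0 < fy g))"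
definition justF :: "(nat \<Rightarrow> bool) \<Rightarrow> (nat \<Rightarrow> bool) \<Rightarrow> nat \<Rightarrow> bool" where
  "justF A C f \<longleftrightarrow> jZ f \<or> jS f \<or> jI f \<or> jC A f \<or> jP0 A C f \<or> jPS A f \<or> jM A f"
definition justC :: "(nat \<Rightarrow> bool) \<Rightarrow> nat \<Rightarrow> bool" where
  "justC C p \<longleftrightarrow> (pfst p = 0 \<and> psnd p = 0) \<or> (pfst p = 1 \<and> psnd p = 0) \<or> pfst p = 2
 \<or> (pfst p = 3 \<and> C (pfst (psnd p)) \<and> (\<forall>k<lenc (psnd (psnd p)). C (nthc (psnd (psnd p)) k)))
 \<or> (pfst p = 4 \<and> C (pfst (psnd p)) \<and> C (psnd (psnd p)))
 \<or> (pfst p = 5 \<and> C (psnd p))"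
definition justP :: "(nat \<Rightarrow> bool) \<Rightarrow> (nat \<Rightarrow> bool) \<Rightarrow> nat \<Rightarrow> bool" where
  "justP A C en \<longleftrightarrow> (pfst en = 0 \<and> justF A C (psnd en)) \<or> (pfst en = 1 \<and> justC C (psnd en))"
definition justFB :: "nat \<Rightarrow> nat \<Rightarrow> nat \<Rightarrow> bool" where
  "justFB w i f \<longleftrightarrow> ((pfst (fp f) = 0 \<and> psnd (fp f) = 0 \<and> fy f = 0)) \<or> ((pfst (fp f) = 1 \<and> psnd (fp f) = 0 \<and> 0 < lenc (fx f) \<and> fy f = Suc (nthc (fx f) 0))) \<or> ((pfst (fp f) = 2 \<and> psnd (fp f) < lenc (fx f) \<and> fy f = nthc (fx f) (psnd (fp f)))) \<or> ((pfst (fp f) = 3 \<and> (\<exists>e<i. pfst (nthc w e) = 0 \<and> fp (psnd (nthc w e)) = pfst (psnd (fp f)) \<and> fy (psnd (nthc w e)) = fy f \<and> lenc (fx (psnd (nthc w e))) = lenc (psnd (psnd (fp f))) \<and> (\<forall>k<lenc (psnd (psnd (fp f))). \<exists>e2<i. pfst (nthc w e2) = 0 \<and> fp (psnd (nthc w e2)) = nthc (psnd (psnd (fp f))) k \<and> fx (psnd (nthc w e2)) = fx f \<and> fy (psnd (nthc w e2)) = nthc (fx (psnd (nthc w e))) k)))) \<or> ((pfst (fp f) = 4 \<and> 0 < lenc (fx f) \<and> nthc (fx f) 0 = 0 \<and> (\<exists>e<i. pfst (nthc w e) = 0 \<and> fp (psnd (nthc w e)) = pfst (psnd (fp f)) \<and>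 fx (psnd (nthc w e)) = tlc (fx f) \<and> fy (psnd (nthc w e)) = fy f) \<and> (\<exists>e3<i. nthc w e3 = pe 1 (fp f)))) \<or> ((pfst (fp f) = 4 \<and> 0 < lenc (fx f) \<and> 0 < nthc (fx f) 0 \<and> (\<exists>e<i. pfst (nthc w e) = 0 \<and> (\<exists>e2<i. pfst (nthc w e2) = 0 \<and> fp (psnd (nthc w e)) = fp f \<and> fx (psnd (nthc w e)) = cons (nthc (fx f) 0 - 1) (tlc (fx f)) \<and> fp (psnd (nthc w e2)) = psnd (psnd (fp f)) \<and> fx (psnd (nthc w e2)) = cons (nthc (fx f) 0 - 1) (cons (fy (psnd (nthc w e))) (tlc (fx f))) \<and> fy (psnd (nthc w e2)) = fy f)))) \<or> ((pfst (fp f) = 5 \<and> (\<exists>e<i. pfst (nthc w e) = 0 \<and> fp (psnd (nthc w e)) = psnd (fp f) \<and> fx (psnd (nthc w e)) = cons (fy f) (fx f) \<and> fy (psnd (nthc w e)) = 0) \<and> (\<forall>m<fy f. \<exists>e<i. pfst (nthc w e) = 0 \<and> fp (psnd (nthc w e)) = psnd (fp f) \<and> fx (psnd (nthc w e)) = cons m (fx f) \<and> 0 < fy (psnd (nthc w e)))))"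
definition justCB :: "nat \<Rightarrow> nat \<Rightarrow> nat \<Rightarrow> bool" where
  "justCB w i p \<longleftrightarrow> (pfst p = 0 \<and> psnd p = 0) \<or> (pfst p = 1 \<and> psnd p = 0) \<or> pfst p = 2
 \<or> (pfst p = 3 \<and> (\<exists>e3<i. nthc w e3 = pe 1 (pfst (psnd p))) \<and> (\<forall>k<lenc (psnd (psnd p)). (\<exists>e3<i. nthc w e3 = pe 1 (nthc (psnd (psnd p)) k))))
 \<or> (pfst p = 4 \<and> (\<exists>e3<i. nthc w e3 = pe 1 (pfst (psnd p))) \<and> (\<exists>e3<i. nthc w e3 = pe 1 (psnd (psnd p))))
 \<or> (pfst p = 5 \<and> (\<exists>e3<i. nthc w e3 = pe 1 (psnd p)))"
definition justB :: "nat \<Rightarrow> nat \<Rightarrow> nat \<Rightarrow> bool" where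
  "justB w i en \<longleftrightarrow> (pfst en = 0 \<and> justFB w i (psnd en)) \<or> (pfst en = 1 \<and> justCB w i (psnd en))"

lemma ex_nthc0: "(\<exists>g. (\<exists>e<i. nthc w e = pe 0 g) \<and> P g) \<longleftrightarrow> (\<exists>e<i. pfst (nthc w e) = 0 \<and> P (psnd (nthc w e)))"
proof
  assume "\<exists>g. (\<exists>e<i. nthc w e = pe 0 g) \<and> P g"
  then obtain g e where "e < i" "nthc w e = pe 0 g" "P g" by blast
  then show "\<exists>e<i. pfst (nthc w e) = 0 \<and> P (psnd (nthc w e))" by auto
next
  assume "\<exists>e<i. pfst (nthc w e) = 0 \<and> P (psnd (nthc w e))"
  then obtain e where "e < i" "pfst (nthc w e) = 0" "P (psnd (nthc w e))" by blast
  moreover then have "nthc w e = pe 0 (psnd (nthc w e))" by (metis pe_pfst_psnd)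
  ultimately show "\<exists>g. (\<exists>e<i. nthc w e = pe 0 g) \<and> P g" by blast
qed

lemma justB_justP: "justB w i en \<longleftrightarrow> justP (\<lambda>g. \<exists>e<i. nthc w e = pe 0 g) (\<lambda>q. \<exists>e<i. nthc w e = pe 1 q) en"
  unfolding justB_def justP_def justFB_def justCB_def justF_def justC_def
    jZ_def jS_def jI_def jC_def jP0_def jPS_def jM_def by (simp only: ex_nthc0)

lemma justP_mono: assumes "justP A C f" "\<And>g. A g \<Longrightarrow> A' g" "\<And>g. C g \<Longrightarrow> C' g" shows "justP A' C' f"
proof -
  have 1: "jC A g \<Longrightarrow> jC A' g" for g unfolding jC_def using assms(2) by iprover
  have 2: "jP0 A C g \<Longrightarrow> jP0 A' C' g" for g unfolding jP0_def using assms(2,3) by iprover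
  have 3: "jPS A g \<Longrightarrow> jPS A' g" for g unfolding jPS_def using assms(2) by iprover
  have 4: "jM A g \<Longrightarrow> jM A' g" for g unfolding jM_def using assms(2) by iprover
  have 5: "justC C g \<Longrightarrow> justC C' g" for g unfolding justC_def using assms(3) by iprover
  have F: "justF A C g \<Longrightarrow> justF A' C' g" for g
    unfolding justF_def using 1 2 3 4 by blast
  show ?thesis using assms(1) F 5 unfolding justP_def by blast
qed

definition valid :: "nat \<Rightarrow> bool" where
  "valid w \<longleftrightarrow> (\<forall>i<lenc w. justB w i (nthc w i))"

lemma rcp_valid: "rcp 1 (\<lambda>ys. valid (nth0 ys 0))"
  unfolding valid_def justB_def justFB_def justCB_def
  apply (rule rc_all2 | simp only: nth0_drop drop_drop)+
  done

definition fsound :: "nat \<Rightarrow> bool" where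
  "fsound g \<longleftrightarrow> (\<exists>c. code c = fp g \<and> eval c (list_decode (fx g)) (fy g))"
definition csound :: "nat \<Rightarrow> bool" where
  "csound q \<longleftrightarrow> (\<exists>c. code c = q)"

lemma lenc_dec: "lenc l = length (list_decode l)"
  by (metis lenc_list list_decode_inverse)
lemma nthc_dec: "k < lenc l \<Longrightarrow> nthc l k = list_decode l ! k"
  by (metis lenc_dec nthc_list list_decode_inverse)
lemma cons_dec: "list_decode (cons a z) = a # list_decode z"
  by (metis list_encode_Cons list_decode_inverse list_encode_inverse)
lemma tlc_dec: "list_decode (tlc z) = tl (list_decode z)"
  by (metis tlc_list list_decode_inverse list_encode_inverse)
lemma p_split: "p = pe (pfst p) (psnd p)" by simp

lemma choose_list:
  assumes "\<forall>k<n. \<exists>c. P k c"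
  shows "\<exists>cs. length cs = n \<and> (\<forall>k<n. P k (cs ! k))"
proof -
  from assms obtain G where "\<forall>k<n. P k (G k)" by metis
  then show ?thesis by (intro exI[of _ "map G [0..<n]"]) auto
qed

lemma code_Cn_list:
  assumes "length cs = length (list_decode l)" "\<forall>k<length cs. code (cs ! k) = list_decode l ! k"
  shows "list_encode (map code cs) = l"
proof -
  have "map code cs = list_decode l" using assms by (intro nth_equalityI) auto
  then show ?thesis by simp
qed

lemma justC_sound:
  assumes j: "justC C p" and IH: "\<And>q. C q \<Longrightarrow> csound q"
  shows "csound p"
proof -
  have sp: "p = pe (pfst p) (psnd p)" by simp
  from j[unfolded justC_def] consider
    (Z) "pfst p = 0" "psnd p = 0" | (S) "pfst p = 1" "psnd p = 0" | (I) "pfst p = 2"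
    | (C) "pfst p = 3" "C (pfst (psnd p))" "\<forall>k<lenc (psnd (psnd p)). C (nthc (psnd (psnd p)) k)"
    | (P) "pfst p = 4" "C (pfst (psnd p))" "C (psnd (psnd p))"
    | (M) "pfst p = 5" "C (psnd p)" by auto
  then show ?thesis
  proof cases
    case Z then show ?thesis using sp unfolding csound_def by (metis code_pe(1))
  next
    case S then show ?thesis using sp unfolding csound_def by (metis code_pe(2))
  next
    case I then show ?thesis using sp unfolding csound_def by (metis code_pe(3))
  next
    case C
    let ?l = "psnd (psnd p)"
    obtain cf where cf: "code cf = pfst (psnd p)" using C IH unfolding csound_def by blast
    have "\<forall>k<length (list_decode ?l). \<exists>c. code c = list_decode ?l ! k"
      using C(3) IH unfolding csound_def by (metis lenc_dec nthc_dec)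
    from choose_list[OF this] obtain cs where cs: "length cs = length (list_decode ?l)"
      "\<forall>k<length (list_decode ?l). code (cs ! k) = list_decode ?l ! k" by blast
    have "list_encode (map code cs) = ?l" using cs by (intro code_Cn_list) auto
    then have "code (Cn cf cs) = p" using cf C(1) sp
      by (simp add: code_pe)
    then show ?thesis unfolding csound_def by blast
  next
    case P
    obtain c1 where "code c1 = pfst (psnd p)" using P IH unfolding csound_def by blast
    moreover obtain c2 where "code c2 = psnd (psnd p)" using P IH unfolding csound_def by blast
    ultimately have "code (Pr c1 c2) = p" using P(1) sp by (simp add: code_pe)
    then show ?thesis unfolding csound_def by blast
  next
    case M
    obtain c1 where "code c1 = psnd p" using M IH unfolding csound_def by blast
    then have "code (Mn c1) = p" using M(1) sp by (simp add: code_pe)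
    then show ?thesis unfolding csound_def by blast
  qed
qed

lemma code_Pr_inv: "code c = pe 4 (pe a b) \<Longrightarrow> \<exists>c1 c2. c = Pr c1 c2 \<and> code c1 = a \<and> code c2 = b"
  by (cases c) (auto simp: code_pe)

lemma justF_sound:
  assumes j: "justF A C f" and IHA: "\<And>g. A g \<Longrightarrow> fsound g" and IHC: "\<And>q. C q \<Longrightarrow> csound q"
  shows "fsound f"
proof -
  have sp: "fp f = pe (pfst (fp f)) (psnd (fp f))" by simp
  define xs where "xs = list_decode (fx f)"
  have lx: "lenc (fx f) = length xs" unfolding xs_def by (rule lenc_dec)
  have nx: "k < length xs \<Longrightarrow> nthc (fx f) k = xs ! k" for k unfolding xs_def by (metis lx nthc_dec xs_def)
  from j[unfolded justF_def] consider (Z) "jZ f" | (S) "jS f" | (I) "jI f" | (C) "jC A f" | (P0) "jP0 A C f"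
    | (PS) "jPS A f" | (M) "jM A f" by blast
  then show ?thesis
  proof cases
    case Z
    then have "fp f = code Z" "fy f = 0" using sp unfolding jZ_def by (simp_all add: code_pe)
    then show ?thesis unfolding fsound_def by (metis eval_Z)
  next
    case S
    then have h: "fp f = code S" "0 < length xs" "fy f = Suc (xs ! 0)" using sp lx nx unfolding jS_def by (simp_all add: code_pe)
    then obtain x xs' where "xs = x # xs'" by (cases xs) auto
    then show ?thesis unfolding fsound_def using h xs_def by (metis eval_S nth_Cons_0)
  next
    case I
    then have h: "fp f = code (Id (psnd (fp f)))" "psnd (fp f) < length xs" "fy f = xs ! psnd (fp f)"
      using sp lx nx unfolding jI_def by (simp_all add: code_pe)
    then show ?thesis unfolding fsound_def using xs_def by (metis eval_Id)
  next
    case C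
    let ?l = "psnd (psnd (fp f))"
    from C obtain g where g: "A g" "fp g = pfst (psnd (fp f))" "fy g = fy f" "lenc (fx g) = lenc ?l"
      "\<forall>k<lenc ?l. \<exists>h. A h \<and> fp h = nthc ?l k \<and> fx h = fx f \<and> fy h = nthc (fx g) k"
      unfolding jC_def by blast
    define ys where "ys = list_decode (fx g)"
    obtain c0 where c0: "code c0 = pfst (psnd (fp f))" "eval c0 ys (fy f)"
      using IHA[OF g(1)] g(2,3) unfolding fsound_def ys_def by auto
    have len: "length ys = length (list_decode ?l)" using g(4) by (simp add: lenc_dec ys_def)
    have "\<forall>k<length ys. \<exists>c. code c = list_decode ?l ! k \<and> eval c xs (ys ! k)"
    proof (intro allI impI)
      fix k assume k: "k < length ys"
      then have k': "k < lenc ?l" using len by (simp add: lenc_dec)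
      then obtain h where h: "A h" "fp h = nthc ?l k" "fx h = fx f" "fy h = nthc (fx g) k" using g(5) by blast
      have "nthc (fx g) k = ys ! k" using k g(4) k' by (simp add: nthc_dec ys_def)
      then show "\<exists>c. code c = list_decode ?l ! k \<and> eval c xs (ys ! k)"
        using IHA[OF h(1)] h k' unfolding fsound_def xs_def by (auto simp: nthc_dec)
    qed
    then obtain cs where cs: "length cs = length ys" "\<forall>k<length ys. code (cs ! k) = list_decode ?l ! k \<and> eval (cs ! k) xs (ys ! k)"
      using choose_list[where P="\<lambda>k c. code c = list_decode ?l ! k \<and> eval c xs (ys ! k)"] by blast
    have "list_all2 (\<lambda>c y. eval c xs y) cs ys" using cs by (simp add: list_all2_conv_all_nth)
    then have ev: "eval (Cn c0 cs) xs (fy f)" using c0(2) by (rule eval_Cn)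
    have "list_encode (map code cs) = ?l" by (rule code_Cn_list) (use cs len in auto)
    then have "code (Cn c0 cs) = fp f" using c0(1) C sp unfolding jC_def
      by (simp add: code_pe)
    then show ?thesis using ev unfolding fsound_def xs_def by blast
  next
    case P0
    from P0 obtain g where g: "A g" "fp g = pfst (psnd (fp f))" "fx g = tlc (fx f)" "fy g = fy f"
      and h: "0 < lenc (fx f)" "nthc (fx f) 0 = 0" "C (fp f)" "pfst (fp f) = 4"
      unfolding jP0_def by blast
    obtain c where c: "code c = fp f" using IHC[OF h(3)] unfolding csound_def by blast
    then obtain c1 c2 where cc: "c = Pr c1 c2" "code c1 = pfst (psnd (fp f))"
      using code_Pr_inv[of c] sp h(4) by (metis pe_pfst_psnd)
    obtain c' where c': "code c' = fp g" "eval c' (list_decode (fx g)) (fy g)" using IHA[OF g(1)] unfolding fsound_def by blast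
    have "c' = c1" using c'(1) cc(2) g(2) code_inj by metis
    moreover obtain xs' where "xs = 0 # xs'" using h(1,2) lx nx by (cases xs) auto
    ultimately have "eval c (0 # xs') (fy f)" using c' g cc by (simp add: tlc_dec xs_def eval_Pr0)
    then show ?thesis using c \<open>xs = 0 # xs'\<close> unfolding fsound_def xs_def by metis
  next
    case PS
    from PS obtain g h where g: "A g" "A h" "fp g = fp f" "fx g = cons (nthc (fx f) 0 - 1) (tlc (fx f))"
      "fp h = psnd (psnd (fp f))" "fx h = cons (nthc (fx f) 0 - 1) (cons (fy g) (tlc (fx f)))" "fy h = fy f"
      and hh: "0 < lenc (fx f)" "0 < nthc (fx f) 0" "pfst (fp f) = 4"
      unfolding jPS_def by blast
    obtain n xs' where xs: "xs = Suc n # xs'" using hh lx nx by (cases xs) (auto, metis gr0_implies_Suc)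
    have n: "nthc (fx f) 0 - 1 = n" using xs nx by auto
    have tl: "list_decode (tlc (fx f)) = xs'" using xs by (simp add: tlc_dec xs_def[symmetric])
    obtain c1 where c1: "code c1 = fp f" "eval c1 (n # xs') (fy g)"
      using IHA[OF g(1)] g(3,4) n tl unfolding fsound_def by (auto simp: cons_dec)
    obtain c2 where c2: "code c2 = psnd (psnd (fp f))" "eval c2 (n # fy g # xs') (fy f)"
      using IHA[OF g(2)] g(5,6,7) n tl unfolding fsound_def by (auto simp: cons_dec)
    obtain a b where ab: "c1 = Pr a b" "code b = psnd (psnd (fp f))"
      using code_Pr_inv[of c1] c1(1) sp hh(3) by (metis pe_pfst_psnd)
    have "b = c2" using ab(2) c2(1) code_inj by metis
    then have "eval c1 (Suc n # xs') (fy f)" using c1(2) c2(2) ab(1) by (simp add: eval_PrS)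
    then show ?thesis using c1(1) xs unfolding fsound_def xs_def by metis
  next
    case M
    from M obtain g where g: "A g" "fp g = psnd (fp f)" "fx g = cons (fy f) (fx f)" "fy g = 0"
      and all: "\<forall>m<fy f. \<exists>g. A g \<and> fp g = psnd (fp f) \<and> fx g = cons m (fx f) \<and> 0 < fy g"
      and t: "pfst (fp f) = 5"
      unfolding jM_def by blast
    obtain c0 where c0: "code c0 = psnd (fp f)" "eval c0 (fy f # xs) 0"
      using IHA[OF g(1)] g unfolding fsound_def by (auto simp: cons_dec xs_def)
    have "\<forall>m<fy f. \<exists>k>0. eval c0 (m # xs) k"
    proof (intro allI impI)
      fix m assume "m < fy f"
      then obtain g' where g': "A g'" "fp g' = psnd (fp f)" "fx g' = cons m (fx f)" "0 < fy g'" using all by blast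
      obtain c' where "code c' = psnd (fp f)" "eval c' (m # xs) (fy g')"
        using IHA[OF g'(1)] g' unfolding fsound_def by (auto simp: cons_dec xs_def)
      then show "\<exists>k>0. eval c0 (m # xs) k" using c0(1) code_inj g'(4) by metis
    qed
    then have "eval (Mn c0) xs (fy f)" using c0(2) by (rule eval_Mn[rotated])
    moreover have "code (Mn c0) = fp f" using c0(1) t sp by (simp add: code_pe)
    ultimately show ?thesis unfolding fsound_def xs_def by blast
  qed
qed


definition esound :: "nat \<Rightarrow> bool" where
  "esound en \<longleftrightarrow> (pfst en = 0 \<longrightarrow> fsound (psnd en)) \<and> (pfst en = 1 \<longrightarrow> csound (psnd en))"

lemma valid_sound: assumes "valid w" shows "i < lenc w \<Longrightarrow> esound (nthc w i)"
proof (induction i rule: less_induct)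
  case (less i)
  have j: "justP (\<lambda>g. \<exists>e<i. nthc w e = pe 0 g) (\<lambda>q. \<exists>e<i. nthc w e = pe 1 q) (nthc w i)"
    using assms less.prems unfolding valid_def justB_justP by blast
  have A: "fsound g" if h: "\<exists>e<i. nthc w e = pe 0 g" for g
  proof -
    obtain e where "e < i" "nthc w e = pe 0 g" using h by blast
    then show ?thesis using less.IH[of e] less.prems unfolding esound_def by auto
  qed
  have C: "csound q" if h: "\<exists>e<i. nthc w e = pe 1 q" for q
  proof -
    obtain e where "e < i" "nthc w e = pe 1 q" using h by blast
    then show ?thesis using less.IH[of e] less.prems unfolding esound_def by auto
  qed
  show ?case using j justF_sound[OF _ A C] justC_sound[OF _ C] unfolding justP_def esound_def by auto
qed

definition validL :: "nat list \<Rightarrow> bool" where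
  "validL L \<longleftrightarrow> (\<forall>i<length L. justP (\<lambda>g. pe 0 g \<in> set (take i L)) (\<lambda>q. pe 1 q \<in> set (take i L)) (L ! i))"

lemma ex_take: "i \<le> length L \<Longrightarrow> (\<exists>e<i. nthc (list_encode L) e = x) \<longleftrightarrow> x \<in> set (take i L)"
  by (auto simp: nthc_list in_set_conv_nth)

lemma valid_list: "valid (list_encode L) \<longleftrightarrow> validL L"
  unfolding valid_def validL_def lenc_list justB_justP
  by (simp add: nthc_list ex_take)

lemma validL_append: assumes "validL L1" "validL L2" shows "validL (L1 @ L2)"
  unfolding validL_def
proof (intro allI impI)
  fix i assume i: "i < length (L1 @ L2)"
  show "justP (\<lambda>g. pe 0 g \<in> set (take i (L1 @ L2))) (\<lambda>q. pe 1 q \<in> set (take i (L1 @ L2))) ((L1 @ L2) ! i)"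
  proof (cases "i < length L1")
    case True
    then show ?thesis using assms(1) unfolding validL_def by (simp add: nth_append)
  next
    case False
    then have "i - length L1 < length L2" using i by simp
    then have "justP (\<lambda>g. pe 0 g \<in> set (take (i - length L1) L2)) (\<lambda>q. pe 1 q \<in> set (take (i - length L1) L2)) (L2 ! (i - length L1))"
      using assms(2) unfolding validL_def by blast
    then show ?thesis using False
      apply (simp add: nth_append)
      apply (erule justP_mono)
      by auto
  qed
qed

lemma validL_snoc: assumes "validL L" "justP (\<lambda>g. pe 0 g \<in> set L) (\<lambda>q. pe 1 q \<in> set L) x"
  shows "validL (L @ [x])"
  unfolding validL_def
proof (intro allI impI)
  fix i assume i: "i < length (L @ [x])"
  show "justP (\<lambda>g. pe 0 g \<in> set (take i (L @ [x]))) (\<lambda>q. pe 1 q \<in> set (take i (L @ [x]))) ((L @ [x]) ! i)"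
  proof (cases "i < length L")
    case True
    then show ?thesis using assms(1) unfolding validL_def by (simp add: nth_append)
  next
    case False
    then have "i = length L" using i by simp
    then show ?thesis using assms(2) by simp
  qed
qed

lemma validL_combine:
  assumes "\<forall>x\<in>set xs. \<exists>L. validL L \<and> a x \<in> set L"
  shows "\<exists>L. validL L \<and> (\<forall>x\<in>set xs. a x \<in> set L)"
  using assms
proof (induction xs)
  case Nil
  have "validL []" by (simp add: validL_def)
  then show ?case by auto
next
  case (Cons x xs)
  then obtain L1 L2 where "validL L1" "\<forall>x\<in>set xs. a x \<in> set L1" "validL L2" "a x \<in> set L2" by auto
  then show ?case by (intro exI[of _ "L1 @ L2"]) (auto intro: validL_append)
qed

lemma justP_cert: "justC C q \<Longrightarrow> justP A C (pe 1 q)" unfolding justP_def by simp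
lemma justP_fact: "justF A C f \<Longrightarrow> justP A C (pe 0 f)" unfolding justP_def by simp

lemma cert_complete: "\<exists>L. validL L \<and> pe 1 (code c) \<in> set L"
proof (induction c)
  case Z
  have "validL ([] @ [pe 1 (code Z)])"
    by (rule validL_snoc, simp add: validL_def, rule justP_cert, simp add: justC_def code_pe)
  then show ?case by auto
next
  case S
  have "validL ([] @ [pe 1 (code S)])"
    by (rule validL_snoc, simp add: validL_def, rule justP_cert, simp add: justC_def code_pe)
  then show ?case by auto
next
  case (Id i)
  have "validL ([] @ [pe 1 (code (Id i))])"
    by (rule validL_snoc, simp add: validL_def, rule justP_cert, simp add: justC_def code_pe)
  then show ?case by auto
next
  case (Cn f gs)
  obtain L1 where L1: "validL L1" "\<forall>g\<in>set gs. pe 1 (code g) \<in> set L1"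
    using validL_combine[of gs "\<lambda>g. pe 1 (code g)"] Cn.IH(2) by blast
  obtain L2 where L2: "validL L2" "pe 1 (code f) \<in> set L2" using Cn.IH(1) by blast
  have "validL ((L1 @ L2) @ [pe 1 (code (Cn f gs))])"
  proof (rule validL_snoc)
    show "validL (L1 @ L2)" using L1 L2 by (rule_tac validL_append) auto
    show "justP (\<lambda>g. pe 0 g \<in> set (L1 @ L2)) (\<lambda>q. pe 1 q \<in> set (L1 @ L2)) (pe 1 (code (Cn f gs)))"
      using L1 L2 by (intro justP_cert) (auto simp: justC_def code_pe lenc_list nthc_list)
  qed
  then show ?case by auto
next
  case (Pr f g)
  then obtain L1 L2 where "validL L1" "pe 1 (code f) \<in> set L1" "validL L2" "pe 1 (code g) \<in> set L2" by blast
  then have "validL ((L1 @ L2) @ [pe 1 (code (Pr f g))])"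
    by (intro validL_snoc validL_append justP_cert) (auto simp: justC_def code_pe)
  then show ?case by auto
next
  case (Mn f)
  then obtain L1 where "validL L1" "pe 1 (code f) \<in> set L1" by blast
  then have "validL (L1 @ [pe 1 (code (Mn f))])"
    by (intro validL_snoc justP_cert) (auto simp: justC_def code_pe)
  then show ?case by auto
qed


abbreviation inL :: "nat list \<Rightarrow> recf \<Rightarrow> nat list \<Rightarrow> nat \<Rightarrow> bool" where
  "inL L c xs y \<equiv> pe 0 (fct (code c) (list_encode xs) y) \<in> set L"

lemma snoc_fact: "validL L \<Longrightarrow> justF (\<lambda>g. pe 0 g \<in> set L) (\<lambda>q. pe 1 q \<in> set L) f \<Longrightarrow>
  \<exists>L'. validL L' \<and> pe 0 f \<in> set L'"
  apply (rule exI[of _ "L @ [pe 0 f]"])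
  apply (rule conjI)
   apply (rule validL_snoc, assumption)
   apply (rule justP_fact, assumption)
  apply simp
  done

lemma lenc_cons[simp]: "lenc (cons x z) = Suc (lenc z)"
  by (simp add: lenc_dec cons_dec)
lemma nthc_cons_0[simp]: "nthc (cons x z) 0 = x"
  by (simp add: nthc_def itl_def)
lemma nthc_cons_Suc[simp]: "nthc (cons x z) (Suc i) = nthc z i"
  by (simp add: nthc_def itl_def funpow_Suc_right del: funpow.simps)

lemma fact_complete: "eval c xs y \<Longrightarrow> \<exists>L. validL L \<and> inL L c xs y"
proof (induction rule: eval.induct)
  case (eval_Z xs)
  have "validL []" by (simp add: validL_def)
  then show ?case by (rule snoc_fact) (simp add: justF_def jZ_def code_pe)
next
  case (eval_S x xs)
  have "validL []" by (simp add: validL_def)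
  then show ?case by (rule snoc_fact) (simp add: justF_def jS_def code_pe lenc_list nthc_list)
next
  case (eval_Id i xs)
  have "validL []" by (simp add: validL_def)
  then show ?case using eval_Id by (rule_tac snoc_fact) (simp_all add: justF_def jI_def code_pe lenc_list nthc_list)
next
  case (eval_Cn xs gs ys f y)
  have "\<forall>p\<in>set (zip gs ys). \<exists>L. validL L \<and> pe 0 (fct (code (fst p)) (list_encode xs) (snd p)) \<in> set L"
    using eval_Cn.IH(1) by (auto simp: list_all2_conv_all_nth in_set_zip)
  from validL_combine[OF this] obtain L1 where L1: "validL L1"
    "\<forall>p\<in>set (zip gs ys). pe 0 (fct (code (fst p)) (list_encode xs) (snd p)) \<in> set L1" by blast
  obtain L2 where L2: "validL L2" "inL L2 f ys y" using eval_Cn.IH(2) by blast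
  have len: "length gs = length ys" using eval_Cn.IH(1) by (rule list_all2_lengthD)
  have mem: "inL (L1 @ L2) (gs ! k) xs (ys ! k)" if "k < length gs" for k
  proof -
    have "(gs ! k, ys ! k) \<in> set (zip gs ys)" using that len by (auto simp: set_zip)
    then show ?thesis using L1(2) by fastforce
  qed
  show ?case
  proof (rule snoc_fact)
    show "validL (L1 @ L2)" using L1 L2 by (rule_tac validL_append) auto
    show "justF (\<lambda>g. pe 0 g \<in> set (L1 @ L2)) (\<lambda>q. pe 1 q \<in> set (L1 @ L2)) (fct (code (Cn f gs)) (list_encode xs) y)"
      unfolding justF_def jC_def
      apply (rule disjI2, rule disjI2, rule disjI2, rule disjI1)
      apply (simp add: code_pe)
      apply (rule exI[of _ "fct (code f) (list_encode ys) y"])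
      using L2 mem len apply (auto simp: lenc_list nthc_list)
      subgoal for k by (rule exI[of _ "fct (code (gs ! k)) (list_encode xs) (ys ! k)"]) auto
      done
  qed
next
  case (eval_Pr0 f xs y g)
  obtain L1 where L1: "validL L1" "inL L1 f xs y" using eval_Pr0.IH by blast
  obtain L2 where L2: "validL L2" "pe 1 (code (Pr f g)) \<in> set L2" using cert_complete by blast
  show ?case
  proof (rule snoc_fact)
    show "validL (L1 @ L2)" using L1 L2 by (rule_tac validL_append) auto
    show "justF (\<lambda>g. pe 0 g \<in> set (L1 @ L2)) (\<lambda>q. pe 1 q \<in> set (L1 @ L2)) (fct (code (Pr f g)) (list_encode (0 # xs)) y)"
      unfolding justF_def jP0_def
      apply (rule disjI2, rule disjI2, rule disjI2, rule disjI2, rule disjI1)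
      apply (simp add: code_pe lenc_list)
      using L1 L2 by (auto simp: code_pe tlc_list simp del: list_encode_Cons)
  qed
next
  case (eval_PrS f g n xs y z)
  obtain L1 where L1: "validL L1" "inL L1 (Pr f g) (n # xs) y" using eval_PrS.IH(1) by blast
  obtain L2 where L2: "validL L2" "inL L2 g (n # y # xs) z" using eval_PrS.IH(2) by blast
  show ?case
  proof (rule snoc_fact)
    show "validL (L1 @ L2)" using L1 L2 by (rule_tac validL_append) auto
    show "justF (\<lambda>g. pe 0 g \<in> set (L1 @ L2)) (\<lambda>q. pe 1 q \<in> set (L1 @ L2)) (fct (code (Pr f g)) (list_encode (Suc n # xs)) z)"
      unfolding justF_def jPS_def
      apply (rule disjI2, rule disjI2, rule disjI2, rule disjI2, rule disjI2, rule disjI1)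
      apply (simp add: code_pe lenc_list)
      apply (rule exI[of _ "fct (code (Pr f g)) (list_encode (n # xs)) y"])
      apply (rule conjI)
      using L1 apply simp
      apply (rule exI[of _ "fct (code g) (list_encode (n # y # xs)) z"])
      using L2 by (simp add: code_pe)
  qed
next
  case (eval_Mn f n xs)
  obtain L1 where L1: "validL L1" "inL L1 f (n # xs) 0" using eval_Mn.IH(1) by blast
  have "\<forall>m<n. \<exists>k>0. \<exists>L. validL L \<and> inL L f (m # xs) k" using eval_Mn.IH(2) by blast
  then obtain K where K: "\<forall>m<n. K m > 0 \<and> (\<exists>L. validL L \<and> inL L f (m # xs) (K m))" by metis
  have "\<forall>m\<in>set [0..<n]. \<exists>L. validL L \<and> inL L f (m # xs) (K m)" using K by auto
  from validL_combine[OF this] obtain L2 where L2: "validL L2" "\<forall>m<n. inL L2 f (m # xs) (K m)" by auto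
  show ?case
  proof (rule snoc_fact)
    show "validL (L1 @ L2)" using L1 L2 by (rule_tac validL_append) auto
    show "justF (\<lambda>g. pe 0 g \<in> set (L1 @ L2)) (\<lambda>q. pe 1 q \<in> set (L1 @ L2)) (fct (code (Mn f)) (list_encode xs) n)"
      unfolding justF_def jM_def
      apply (intro disjI2)
      apply (simp add: code_pe)
      apply (rule conjI)
       apply (rule exI[of _ "fct (code f) (list_encode (n # xs)) 0"])
      using L1 apply simp
      apply (intro allI impI)
      subgoal for m
        apply (rule exI[of _ "fct (code f) (list_encode (m # xs)) (K m)"])
        using L2 K by simp
      done
  qed
qed

definition hasfact :: "nat \<Rightarrow> nat \<Rightarrow> nat \<Rightarrow> bool" where
  "hasfact w n x \<longleftrightarrow> (\<exists>i<lenc w. pfst (nthc w i) = 0 \<and> fp (psnd (nthc w i)) = n \<and> fx (psnd (nthc w i)) = cons x 0)"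

definition hasfactL :: "nat list \<Rightarrow> nat \<Rightarrow> nat \<Rightarrow> bool" where
  "hasfactL L n x \<longleftrightarrow> (\<exists>y. pe 0 (fct n (cons x 0) y) \<in> set L)"

lemma hasfact_list: "hasfact (list_encode L) n x \<longleftrightarrow> hasfactL L n x"
proof
  assume "hasfact (list_encode L) n x"
  then obtain i where i: "i < length L" "pfst (L ! i) = 0" "fp (psnd (L ! i)) = n" "fx (psnd (L ! i)) = cons x 0"
    unfolding hasfact_def by (auto simp: lenc_list nthc_list)
  then have "L ! i = pe 0 (fct n (cons x 0) (fy (psnd (L ! i))))"
    by (metis fact_eta pe_pfst_psnd)
  then show "hasfactL L n x" unfolding hasfactL_def using i(1) by (metis nth_mem)
next
  assume "hasfactL L n x"
  then obtain y i where "i < length L" "L ! i = pe 0 (fct n (cons x 0) y)"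
    unfolding hasfactL_def by (metis in_set_conv_nth)
  then show "hasfact (list_encode L) n x" unfolding hasfact_def by (auto simp: lenc_list nthc_list)
qed

lemma W_iff: "x \<in> W n \<longleftrightarrow> (\<exists>L. validL L \<and> hasfactL L n x)"
proof
  assume "x \<in> W n"
  then obtain c y where c: "code c = n" "eval c [x] y" unfolding W_def by blast
  from fact_complete[OF c(2)] obtain L where "validL L" "inL L c [x] y" by blast
  then show "\<exists>L. validL L \<and> hasfactL L n x" unfolding hasfactL_def using c(1)
    by (auto simp: list_encode.simps(1))
next
  assume "\<exists>L. validL L \<and> hasfactL L n x"
  then obtain L y where L: "validL L" "pe 0 (fct n (cons x 0) y) \<in> set L" unfolding hasfactL_def by blast
  then obtain i where i: "i < length L" "L ! i = pe 0 (fct n (cons x 0) y)" by (metis in_set_conv_nth)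
  have "esound (nthc (list_encode L) i)" using valid_sound[of "list_encode L" i] L(1) i(1)
    by (simp add: valid_list lenc_list)
  then have "fsound (fct n (cons x 0) y)" using i by (simp add: nthc_list esound_def)
  then show "x \<in> W n" unfolding fsound_def W_def by (auto simp: cons_dec)
qed

lemma hasfactL_mono: "hasfactL L n x \<Longrightarrow> set L \<subseteq> set L' \<Longrightarrow> hasfactL L' n x"
  unfolding hasfactL_def by blast

lemma V_iff: "(a, b) \<in> V n \<longleftrightarrow> (\<exists>L. validL L \<and> hasfactL L n (pe a b))"
  unfolding V_def by (simp add: W_iff pe_def)

lemma rc_hasfact: "rc k w \<Longrightarrow> rc k n \<Longrightarrow> rc k x \<Longrightarrow> rcp k (\<lambda>xs. hasfact (w xs) (n xs) (x xs))"
proof -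
  have "rcp 3 (\<lambda>ys. hasfact (nth0 ys 0) (nth0 ys 1) (nth0 ys 2))"
    unfolding hasfact_def by (rule rc_all2 | simp only: nth0_drop drop_drop)+
  then show "rc k w \<Longrightarrow> rc k n \<Longrightarrow> rc k x \<Longrightarrow> rcp k (\<lambda>xs. hasfact (w xs) (n xs) (x xs))"
    by (rule rcp_tri)
qed

lemma rc_valid: "rc k w \<Longrightarrow> rcp k (\<lambda>xs. valid (w xs))"
  by (rule rcp_un[OF rcp_valid])


lemma kcode: "code (K n) = rec_nat (pe 0 0) (\<lambda>m r. pe 3 (pe (pe 1 0) (cons r 0))) n"
  by (induction n) (auto simp: code_pe cons_def)

lemma semidec:
  assumes R: "rcp 3 (\<lambda>ys. R (nth0 ys 0) (nth0 ys 1) (nth0 ys 2))"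
  shows "\<exists>t. computable t \<and> (\<forall>n. W (t n) = {x. \<exists>w. R w n x})"
proof -
  have "rc 3 (\<lambda>ys. if R (nth0 ys 0) (nth0 ys 1) (nth0 ys 2) then 0 else 1)"
    by (rule rc_if[OF R rc_const rc_const])
  then obtain cq where cq: "\<And>ys. length ys = 3 \<Longrightarrow> eval cq ys (if R (nth0 ys 0) (nth0 ys 1) (nth0 ys 2) then 0 else 1)"
    unfolding rc_def by blast
  have cq': "eval cq [w, n, x] (if R w n x then 0 else 1)" for w n x
    using cq[of "[w, n, x]"] by (simp add: numeral_2_eq_2)
  define P where "P n = Cn (Mn cq) [K n, Id 0]" for n
  have dom: "(\<exists>y. eval (P n) [x] y) \<longleftrightarrow> (\<exists>w. R w n x)" for n x
  proof
    assume "\<exists>y. eval (P n) [x] y"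
    then obtain y where "eval (Cn (Mn cq) [K n, Id 0]) [x] y" unfolding P_def by blast
    then obtain ys where ys: "list_all2 (\<lambda>g y. eval g [x] y) [K n, Id 0] ys" "eval (Mn cq) ys y"
      by (blast elim: evCn)
    then obtain a b where ab: "ys = [a, b]" "eval (K n) [x] a" "eval (Id 0) [x] b"
      by (cases ys; cases "tl ys"; auto)
    have "a = n" using eval_det[OF ab(2) eval_K] .
    moreover have "b = x" using eval_det[OF ab(3) eval_Id[of 0 "[x]"]] by simp
    ultimately have "eval (Mn cq) [n, x] y" using ys ab by simp
    then have "eval cq [y, n, x] 0" by (blast elim: evMn)
    then have "(if R y n x then 0 else 1) = (0::nat)" using eval_det[OF cq'] by metis
    then show "\<exists>w. R w n x" by (auto split: if_splits)
  next
    assume "\<exists>w. R w n x"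
    define y where "y = (LEAST w. R w n x)"
    have Ry: "R y n x" unfolding y_def using \<open>\<exists>w. R w n x\<close> by (metis LeastI)
    have "\<forall>m<y. \<exists>k>0. eval cq (m # [n, x]) k"
    proof (intro allI impI)
      fix m assume "m < y"
      then have "\<not> R m n x" unfolding y_def using not_less_Least by blast
      then show "\<exists>k>0. eval cq (m # [n, x]) k" using cq'[of m n x] by (intro exI[of _ 1]) simp
    qed
    moreover have "eval cq (y # [n, x]) 0" using cq'[of y n x] Ry by simp
    ultimately have "eval (Mn cq) [n, x] y" by (intro eval_Mn)
    moreover have "list_all2 (\<lambda>g y. eval g [x] y) [K n, Id 0] [n, x]"
      using eval_K eval_Id[of 0 "[x]"] by simp
    ultimately have "eval (P n) [x] y" unfolding P_def by (intro eval_Cn)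
    then show "\<exists>y. eval (P n) [x] y" by blast
  qed
  have W: "W (code (P n)) = {x. \<exists>w. R w n x}" for n
    unfolding W_def using dom code_inj by blast
  have "rc 1 (\<lambda>ys. pe 3 (pe (code (Mn cq)) (cons (rec_nat (pe 0 0) (\<lambda>m r. pe 3 (pe (pe 1 0) (cons r 0))) (nth0 ys 0)) (cons (pe 2 0) 0))))"
    by (rule rc_rec rc_all2 | simp only: nth0_drop drop_drop)+
  moreover have "code (P n) = pe 3 (pe (code (Mn cq)) (cons (rec_nat (pe 0 0) (\<lambda>m r. pe 3 (pe (pe 1 0) (cons r 0))) n) (cons (pe 2 0) 0)))" for n
    unfolding P_def by (simp add: code_pe kcode list_encode.simps(1))
  ultimately have "rc 1 (\<lambda>ys. code (P (nth0 ys 0)))" by simp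
  then obtain c where c: "\<And>ys. length ys = 1 \<Longrightarrow> eval c ys (code (P (nth0 ys 0)))" unfolding rc_def by blast
  have "computable (\<lambda>n. code (P n))" unfolding computable_def
    using c[of "[_]"] by (intro exI[of _ c]) simp
  then show ?thesis using W by blast
qed


lemma validL_combine2:
  assumes "\<forall>x\<in>set xs. \<exists>L. validL L \<and> P x L" and mono: "\<And>x L L'. P x L \<Longrightarrow> set L \<subseteq> set L' \<Longrightarrow> P x L'"
  shows "\<exists>L. validL L \<and> (\<forall>x\<in>set xs. P x L)"
  using assms(1)
proof (induction xs)
  case Nil
  have "validL []" by (simp add: validL_def)
  then show ?case by auto
next
  case (Cons x xs)
  then obtain L1 L2 where "validL L1" "\<forall>x\<in>set xs. P x L1" "validL L2" "P x L2" by auto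
  then show ?case by (intro exI[of _ "L1 @ L2"]) (auto intro: validL_append mono)
qed

definition chainOK :: "nat \<Rightarrow> nat \<Rightarrow> nat \<Rightarrow> nat \<Rightarrow> nat \<Rightarrow> nat \<Rightarrow> bool" where
  "chainOK w1 z n a b m \<longleftrightarrow> m \<le> lenc z \<and> nthc z 0 = a \<and> nthc z (lenc z - 1) = b
     \<and> (\<forall>l<lenc z - 1. hasfact w1 n (pe (nthc z l) (nthc z (Suc l))))"

lemma chain_sem:
  assumes m: "1 \<le> m"
  shows "(\<exists>w. valid (pfst w) \<and> chainOK (pfst w) (psnd w) n a b m) \<longleftrightarrow> (\<exists>k. m \<le> Suc k \<and> (a, b) \<in> V n ^^ k)"
proof
  assume "\<exists>w. valid (pfst w) \<and> chainOK (pfst w) (psnd w) n a b m"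
  then obtain w1 z where v: "valid w1" and ch: "chainOK w1 z n a b m" by (metis pfst_pe psnd_pe)
  define L where "L = list_decode z"
  define W1 where "W1 = list_decode w1"
  have z: "z = list_encode L" and w1: "w1 = list_encode W1" unfolding L_def W1_def by simp_all
  have vL: "validL W1" using v w1 valid_list by simp
  define k where "k = length L - 1"
  have lenL: "m \<le> length L" using ch z by (simp add: chainOK_def lenc_list)
  then have kk: "length L = Suc k" using m unfolding k_def by simp
  have "(a, b) \<in> V n ^^ k" unfolding relpow_fun_conv
  proof (intro exI conjI allI impI)
    show "L ! 0 = a" using ch z kk by (simp add: chainOK_def lenc_list nthc_list)
    show "L ! k = b" using ch z kk by (simp add: chainOK_def lenc_list nthc_list)
    fix i assume i: "i < k"
    have "hasfact w1 n (pe (L ! i) (L ! Suc i))" using ch z kk i by (simp add: chainOK_def lenc_list nthc_list)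
    then show "(L ! i, L ! Suc i) \<in> V n" using vL w1 by (auto simp: V_iff hasfact_list)
  qed
  then show "\<exists>k. m \<le> Suc k \<and> (a, b) \<in> V n ^^ k" using lenL kk by auto
next
  assume "\<exists>k. m \<le> Suc k \<and> (a, b) \<in> V n ^^ k"
  then obtain k f where k: "m \<le> Suc k" "f 0 = a" "f k = b" "\<forall>i<k. (f i, f (Suc i)) \<in> V n"
    unfolding relpow_fun_conv by blast
  have "\<forall>i\<in>set [0..<k]. \<exists>L. validL L \<and> hasfactL L n (pe (f i) (f (Suc i)))"
    using k(4) by (auto simp: V_iff)
  then have "\<exists>L. validL L \<and> (\<forall>i\<in>set [0..<k]. hasfactL L n (pe (f i) (f (Suc i))))"
    by (rule validL_combine2) (erule hasfactL_mono)
  then obtain L where L: "validL L" "\<forall>i<k. hasfactL L n (pe (f i) (f (Suc i)))" by auto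
  define z where "z = list_encode (map f [0..<Suc k])"
  have "valid (list_encode L) \<and> chainOK (list_encode L) z n a b m"
    using L k unfolding chainOK_def z_def
    by (simp add: valid_list lenc_list nthc_list hasfact_list nth_append del: upt_Suc)
  then show "\<exists>w. valid (pfst w) \<and> chainOK (pfst w) (psnd w) n a b m"
    by (intro exI[of _ "pe (list_encode L) z"]) simp
qed

lemma rcp_chainR: "rcp 3 (\<lambda>ys. valid (pfst (nth0 ys 0)) \<and> chainOK (pfst (nth0 ys 0)) (psnd (nth0 ys 0)) (nth0 ys 1) (pfst (nth0 ys 2)) (psnd (nth0 ys 2)) m)"
  unfolding chainOK_def by (rule rc_valid rc_hasfact rc_all2 | simp only: nth0_drop drop_drop)+

lemma V_W: "(a, b) \<in> V m \<longleftrightarrow> pe a b \<in> W m" by (simp add: V_def pe_def)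

lemma part1: "\<exists>t. computable t \<and> (\<forall>n. V (t n) = (V n)\<^sup>+)"
proof -
  obtain t where t: "computable t" "\<forall>n. W (t n) = {x. \<exists>w. valid (pfst w) \<and> chainOK (pfst w) (psnd w) n (pfst x) (psnd x) 2}"
    using semidec[OF rcp_chainR[of 2]] by blast
  have "V (t n) = (V n)\<^sup>+" for n
  proof -
    have "(a, b) \<in> V (t n) \<longleftrightarrow> (a, b) \<in> (V n)\<^sup>+" for a b
    proof -
      have "(a, b) \<in> V (t n) \<longleftrightarrow> (\<exists>k. 2 \<le> Suc k \<and> (a, b) \<in> V n ^^ k)"
        using t(2) chain_sem[of 2 n a b] by (simp add: V_W)
      also have "\<dots> \<longleftrightarrow> (a, b) \<in> (V n)\<^sup>+" unfolding trancl_power by (auto simp: Suc_le_eq)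
      finally show ?thesis .
    qed
    then show ?thesis by auto
  qed
  then show ?thesis using t(1) by blast
qed

lemma part2: "\<exists>t. computable t \<and> (\<forall>n. V (t n) = (V n)\<^sup>*)"
proof -
  obtain t where t: "computable t" "\<forall>n. W (t n) = {x. \<exists>w. valid (pfst w) \<and> chainOK (pfst w) (psnd w) n (pfst x) (psnd x) 1}"
    using semidec[OF rcp_chainR[of 1]] by blast
  have "V (t n) = (V n)\<^sup>*" for n
  proof -
    have "(a, b) \<in> V (t n) \<longleftrightarrow> (a, b) \<in> (V n)\<^sup>*" for a b
    proof -
      have "(a, b) \<in> V (t n) \<longleftrightarrow> (\<exists>k. 1 \<le> Suc k \<and> (a, b) \<in> V n ^^ k)"
        using t(2) chain_sem[of 1 n a b] by (simp add: V_W)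
      also have "\<dots> \<longleftrightarrow> (a, b) \<in> (V n)\<^sup>*" unfolding rtrancl_power by auto
      finally show ?thesis .
    qed
    then show ?thesis by auto
  qed
  then show ?thesis using t(1) by blast
qed


definition edgeS :: "nat \<Rightarrow> nat \<Rightarrow> nat \<Rightarrow> nat \<Rightarrow> bool" where
  "edgeS n s a b \<longleftrightarrow> (\<exists>w1<s. valid w1 \<and> hasfact w1 n (pe a b))"

definition chainS :: "nat \<Rightarrow> nat \<Rightarrow> nat \<Rightarrow> nat \<Rightarrow> nat \<Rightarrow> bool" where
  "chainS n s z a b \<longleftrightarrow> 1 \<le> lenc z \<and> nthc z 0 = a \<and> nthc z (lenc z - 1) = b
     \<and> (\<forall>l<lenc z - 1. edgeS n s (nthc z l) (nthc z (Suc l)))"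

definition lb :: "nat \<Rightarrow> nat \<Rightarrow> nat" where
  "lb s k = rec_nat 0 (\<lambda>m r. Suc (pe s r)) k"

definition bad :: "nat \<Rightarrow> nat \<Rightarrow> bool" where
  "bad n s \<longleftrightarrow> (\<exists>a<s. \<exists>b<s. a \<noteq> b \<and> (\<exists>z<Suc (lb s (Suc (s * s))). chainS n s z a b)
      \<and> (\<exists>z<Suc (lb s (Suc (s * s))). chainS n s z b a))"

definition R3 :: "nat \<Rightarrow> nat \<Rightarrow> nat \<Rightarrow> bool" where
  "R3 w n x \<longleftrightarrow> \<not> bad n (pfst w) \<and> chainS n (pfst w) (psnd w) (pfst x) (psnd x)"

lemma rcp_R3: "rcp 3 (\<lambda>ys. R3 (nth0 ys 0) (nth0 ys 1) (nth0 ys 2))"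
  unfolding R3_def bad_def chainS_def edgeS_def lb_def
  apply (rule rc_valid rc_hasfact rc_rec rc_all2 | simp only: nth0_drop drop_drop)+
  done

definition Es :: "nat \<Rightarrow> nat \<Rightarrow> (nat \<times> nat) set" where
  "Es n s = {(a, b). edgeS n s a b}"

lemma Es_mono: "s \<le> s' \<Longrightarrow> Es n s \<subseteq> Es n s'"
  unfolding Es_def edgeS_def by (auto intro: less_le_trans)

lemma fx_le: "fx g \<le> g" unfolding fx_def by (meson le_trans pfst_le psnd_le)

lemma edgeS_bound: "edgeS n s a b \<Longrightarrow> a < s \<and> b < s"
proof -
  assume "edgeS n s a b"
  then obtain w1 i where w: "w1 < s" "i < lenc w1" "fx (psnd (nthc w1 i)) = cons (pe a b) 0"
    unfolding edgeS_def hasfact_def by blast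
  have "pe a b < cons (pe a b) 0" unfolding cons_def using pe_ge1[of "pe a b" 0] by simp
  also have "\<dots> \<le> psnd (nthc w1 i)" using w(3) fx_le by metis
  also have "\<dots> \<le> w1" using psnd_le nthc_le le_trans by metis
  finally have "pe a b < s" using w(1) by simp
  moreover have "a \<le> pe a b" "b \<le> pe a b" by (rule pe_ge1, rule pe_ge2)
  ultimately show ?thesis by linarith
qed

lemma Es_sub_V: "Es n s \<subseteq> V n"
proof
  fix p assume "p \<in> Es n s"
  then obtain a b w1 where p: "p = (a, b)" "valid w1" "hasfact w1 n (pe a b)"
    unfolding Es_def edgeS_def by blast
  then have "validL (list_decode w1)" "hasfactL (list_decode w1) n (pe a b)"
    using valid_list hasfact_list by (metis list_decode_inverse)+
  then show "p \<in> V n" using p(1) V_iff by blast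
qed

lemma V_sub_Es: "(a, b) \<in> V n \<Longrightarrow> \<exists>s. (a, b) \<in> Es n s"
proof -
  assume "(a, b) \<in> V n"
  then obtain L where "validL L" "hasfactL L n (pe a b)" using V_iff by blast
  then have "edgeS n (Suc (list_encode L)) a b" unfolding edgeS_def
    by (intro exI[of _ "list_encode L"]) (simp add: valid_list hasfact_list)
  then show ?thesis unfolding Es_def by blast
qed

lemma chainS_sem: "(\<exists>z. chainS n s z a b) \<longleftrightarrow> (a, b) \<in> (Es n s)\<^sup>*"
proof
  assume "\<exists>z. chainS n s z a b"
  then obtain z where ch: "chainS n s z a b" by blast
  define L where "L = list_decode z"
  have z: "z = list_encode L" unfolding L_def by simp
  define k where "k = length L - 1"
  have "1 \<le> length L" using ch z by (simp add: chainS_def lenc_list)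
  then have kk: "length L = Suc k" unfolding k_def by simp
  have "(a, b) \<in> Es n s ^^ k" unfolding relpow_fun_conv
  proof (intro exI conjI allI impI)
    show "L ! 0 = a" using ch z kk by (simp add: chainS_def lenc_list nthc_list)
    show "L ! k = b" using ch z kk by (simp add: chainS_def lenc_list nthc_list)
    fix i assume i: "i < k"
    show "(L ! i, L ! Suc i) \<in> Es n s" using ch z kk i by (simp add: chainS_def lenc_list nthc_list Es_def)
  qed
  then show "(a, b) \<in> (Es n s)\<^sup>*" using rtrancl_power by blast
next
  assume "(a, b) \<in> (Es n s)\<^sup>*"
  then obtain k f where k: "f 0 = a" "f k = b" "\<forall>i<k. (f i, f (Suc i)) \<in> Es n s"
    unfolding rtrancl_power relpow_fun_conv by blast
  have "chainS n s (list_encode (map f [0..<Suc k])) a b"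
    using k unfolding chainS_def Es_def
    by (simp add: lenc_list nthc_list nth_append del: upt_Suc)
  then show "\<exists>z. chainS n s z a b" by blast
qed

lemma lb_Suc: "lb s (Suc k) = Suc (pe s (lb s k))" by (simp add: lb_def)

lemma lb_bound: "length L \<le> k \<Longrightarrow> \<forall>x\<in>set L. x \<le> s \<Longrightarrow> list_encode L \<le> lb s k"
proof (induction L arbitrary: k)
  case Nil then show ?case by simp
next
  case (Cons x L)
  then obtain k' where k: "k = Suc k'" "length L \<le> k'" by (cases k) auto
  then have "list_encode L \<le> lb s k'" using Cons by simp
  then show ?case using k Cons.prems pe_mono[of x s "list_encode L" "lb s k'"] by (simp add: lb_Suc cons_def)
qed

lemma short_chain:
  assumes "(a, b) \<in> (Es n s)\<^sup>*" "a \<noteq> b"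
  shows "\<exists>z<Suc (lb s (Suc (s * s))). chainS n s z a b"
proof -
  have sub: "Es n s \<subseteq> {..<s} \<times> {..<s}" using edgeS_bound unfolding Es_def by auto
  then have fin: "finite (Es n s)" by (rule finite_subset) simp
  have card: "card (Es n s) \<le> s * s" using card_mono[OF _ sub] by simp
  from assms(1) obtain k where k: "k \<le> card (Es n s)" "(a, b) \<in> Es n s ^^ k"
    using rtrancl_finite_eq_relpow[OF fin] by blast
  then obtain f where f: "f 0 = a" "f k = b" "\<forall>i<k. (f i, f (Suc i)) \<in> Es n s"
    unfolding relpow_fun_conv by blast
  have "k \<noteq> 0"
  proof
    assume "k = 0" then show False using f assms(2) by simp
  qed
  have fs: "f i < s" if "i \<le> k" for i
  proof (cases "i < k")
    case True then show ?thesis using f(3) sub by blast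
  next
    case False
    then have "i = Suc (k - 1)" using that \<open>k \<noteq> 0\<close> by simp
    moreover have "k - 1 < k" using \<open>k \<noteq> 0\<close> by simp
    ultimately show ?thesis using f(3) sub by blast
  qed
  define z where "z = list_encode (map f [0..<Suc k])"
  have "chainS n s z a b"
    using f unfolding chainS_def Es_def z_def
    by (simp add: lenc_list nthc_list nth_append del: upt_Suc)
  moreover have "z \<le> lb s (Suc (s * s))" unfolding z_def
  proof (rule lb_bound)
    show "length (map f [0..<Suc k]) \<le> Suc (s * s)" using k card by (simp del: upt_Suc)
    show "\<forall>x\<in>set (map f [0..<Suc k]). x \<le> s"
    proof
      fix x assume "x \<in> set (map f [0..<Suc k])"
      then obtain i where "i \<le> k" "x = f i" by (auto simp del: upt_Suc simp: less_Suc_eq_le)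
      then show "x \<le> s" using fs by fastforce
    qed
  qed
  ultimately show ?thesis by (intro exI[of _ z]) auto
qed

lemma bad_sem: "bad n s \<longleftrightarrow> (\<exists>a b. a \<noteq> b \<and> (a, b) \<in> (Es n s)\<^sup>* \<and> (b, a) \<in> (Es n s)\<^sup>*)"
proof
  assume "bad n s"
  then obtain a b z1 z2 where "a \<noteq> b" "chainS n s z1 a b" "chainS n s z2 b a"
    unfolding bad_def by blast
  then have "a \<noteq> b" "(a, b) \<in> (Es n s)\<^sup>*" "(b, a) \<in> (Es n s)\<^sup>*"
    using chainS_sem[of n s a b] chainS_sem[of n s b a] by blast+
  then show "\<exists>a b. a \<noteq> b \<and> (a, b) \<in> (Es n s)\<^sup>* \<and> (b, a) \<in> (Es n s)\<^sup>*" by blast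
next
  assume "\<exists>a b. a \<noteq> b \<and> (a, b) \<in> (Es n s)\<^sup>* \<and> (b, a) \<in> (Es n s)\<^sup>*"
  then obtain a b where ab: "a \<noteq> b" "(a, b) \<in> (Es n s)\<^sup>*" "(b, a) \<in> (Es n s)\<^sup>*" by blast
  have lt: "x < s" if "(x, y) \<in> (Es n s)\<^sup>*" "x \<noteq> y" for x y
    using that(1)
  proof (cases rule: converse_rtranclE)
    case base then show ?thesis using that(2) by simp
  next
    case (step c)
    then show ?thesis using edgeS_bound unfolding Es_def by blast
  qed
  have "a < s" using lt ab by blast
  moreover have "b < s" using lt ab by metis
  moreover obtain z1 where "z1 < Suc (lb s (Suc (s * s)))" "chainS n s z1 a b" using short_chain ab by blast
  moreover obtain z2 where "z2 < Suc (lb s (Suc (s * s)))" "chainS n s z2 b a" using short_chain ab by metis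
  ultimately show "bad n s" unfolding bad_def using ab(1) by blast
qed

lemma bad_mono: assumes "bad n s" "s \<le> s'" shows "bad n s'"
proof -
  obtain a b where ab: "a \<noteq> b" "(a, b) \<in> (Es n s)\<^sup>*" "(b, a) \<in> (Es n s)\<^sup>*" using assms(1) bad_sem by blast
  have "(Es n s)\<^sup>* \<subseteq> (Es n s')\<^sup>*" using Es_mono[OF assms(2)] by (rule rtrancl_mono)
  then show ?thesis using ab bad_sem by blast
qed

lemma part3: "\<exists>oo. computable oo \<and> (\<forall>n. V (oo n) = {(a, b). \<exists>s. \<not> bad n s \<and> (a, b) \<in> (Es n s)\<^sup>*})"
proof -
  obtain t where t: "computable t" "\<forall>n. W (t n) = {x. \<exists>w. R3 w n x}"
    using semidec[OF rcp_R3] by blast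
  have "V (t n) = {(a, b). \<exists>s. \<not> bad n s \<and> (a, b) \<in> (Es n s)\<^sup>*}" for n
  proof -
    have "(a, b) \<in> V (t n) \<longleftrightarrow> (\<exists>s. \<not> bad n s \<and> (a, b) \<in> (Es n s)\<^sup>*)" for a b
    proof -
      have "(a, b) \<in> V (t n) \<longleftrightarrow> (\<exists>w. R3 w n (pe a b))" using t(2) by (simp add: V_W)
      also have "\<dots> \<longleftrightarrow> (\<exists>s z. \<not> bad n s \<and> chainS n s z a b)"
      proof
        assume "\<exists>w. R3 w n (pe a b)"
        then obtain w where "R3 w n (pe a b)" by blast
        then show "\<exists>s z. \<not> bad n s \<and> chainS n s z a b" unfolding R3_def by auto
      next
        assume "\<exists>s z. \<not> bad n s \<and> chainS n s z a b"
        then obtain s z where "\<not> bad n s" "chainS n s z a b" by blast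
        then have "R3 (pe s z) n (pe a b)" unfolding R3_def by simp
        then show "\<exists>w. R3 w n (pe a b)" by blast
      qed
      also have "\<dots> \<longleftrightarrow> (\<exists>s. \<not> bad n s \<and> (a, b) \<in> (Es n s)\<^sup>*)" using chainS_sem by blast
      finally show ?thesis .
    qed
    then show ?thesis by auto
  qed
  then show ?thesis using t(1) by blast
qed


lemma rtrancl_refl_trans: assumes "refl_on UNIV r" "trans r" shows "r\<^sup>* = r"
proof
  show "r\<^sup>* \<subseteq> r"
  proof
    fix p assume "p \<in> r\<^sup>*"
    then obtain a b where p: "p = (a, b)" "(a, b) \<in> r\<^sup>*" by (cases p) auto
    from p(2) have "(a, b) \<in> r"
    proof (induction rule: rtrancl_induct)
      case base then show ?case using assms(1) unfolding refl_on_def by auto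
    next
      case (step y z) then show ?case using assms(2) unfolding trans_def by blast
    qed
    then show "p \<in> r" using p(1) by simp
  qed
qed (auto)

lemma Es_0: "Es n 0 = {}" unfolding Es_def edgeS_def by simp

lemma not_bad_0: "\<not> bad n 0"
  unfolding bad_sem Es_0 by simp

theorem proposition16:
  shows "(\<exists>t. computable t \<and> (\<forall>n. V (t n) \<in> ceT) \<and> (\<forall>n. V n \<in> ceT \<longrightarrow> V n = V (t n))
           \<and> (\<forall>m n. V m = V n \<longrightarrow> V (t m) = V (t n)))
    \<and> (\<exists>p. computable p \<and> (\<forall>n. V (p n) \<in> ceP) \<and> (\<forall>n. V n \<in> ceP \<longrightarrow> V n = V (p n))
           \<and> (\<forall>m n. V m = V n \<longrightarrow> V (p m) = V (p n)))
    \<and> (\<exists>oo. computable oo \<and> (\<forall>n. V (oo n) \<in> ceO) \<and> (\<forall>n. V n \<in> ceO \<longrightarrow> V n = V (oo n)))"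
proof (intro conjI)
  obtain t where t: "computable t" "\<And>n. V (t n) = (V n)\<^sup>+" using part1 by blast
  show "\<exists>t. computable t \<and> (\<forall>n. V (t n) \<in> ceT) \<and> (\<forall>n. V n \<in> ceT \<longrightarrow> V n = V (t n))
           \<and> (\<forall>m n. V m = V n \<longrightarrow> V (t m) = V (t n))"
  proof (intro exI[of _ t] conjI allI impI)
    show "computable t" by (rule t(1))
    fix n
    show "V (t n) \<in> ceT" unfolding ceT_def ce_rel_def using t(2)[of n] by (auto simp: trans_trancl)
    assume "V n \<in> ceT"
    then show "V n = V (t n)" unfolding ceT_def using t(2)[of n] by (simp add: trancl_id)
  next
    fix m n assume "V m = V n" then show "V (t m) = V (t n)" using t(2) by simp
  qed
next
  obtain t where t: "computable t" "\<And>n. V (t n) = (V n)\<^sup>*" using part2 by blast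
  show "\<exists>t. computable t \<and> (\<forall>n. V (t n) \<in> ceP) \<and> (\<forall>n. V n \<in> ceP \<longrightarrow> V n = V (t n))
           \<and> (\<forall>m n. V m = V n \<longrightarrow> V (t m) = V (t n))"
  proof (intro exI[of _ t] conjI allI impI)
    show "computable t" by (rule t(1))
    fix n
    show "V (t n) \<in> ceP" unfolding ceP_def ce_rel_def preorder_on_def using t(2)[of n]
      by (auto simp: trans_rtrancl refl_on_def)
    assume "V n \<in> ceP"
    then show "V n = V (t n)" unfolding ceP_def preorder_on_def using t(2)[of n] rtrancl_refl_trans[of "V n"] by simp
  next
    fix m n assume "V m = V n" then show "V (t m) = V (t n)" using t(2) by simp
  qed
next
  obtain t where t: "computable t" "\<And>n. V (t n) = {(a, b). \<exists>s. \<not> bad n s \<and> (a, b) \<in> (Es n s)\<^sup>*}"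
    using part3 by blast
  show "\<exists>oo. computable oo \<and> (\<forall>n. V (oo n) \<in> ceO) \<and> (\<forall>n. V n \<in> ceO \<longrightarrow> V n = V (oo n))"
  proof (intro exI[of _ t] conjI allI impI)
    show "computable t" by (rule t(1))
    fix n
    have refl: "refl_on UNIV (V (t n))" unfolding refl_on_def t(2) using not_bad_0 by blast
    have trans: "trans (V (t n))"
    proof (rule transI)
      fix a b c assume "(a, b) \<in> V (t n)" "(b, c) \<in> V (t n)"
      then obtain s1 s2 where s: "\<not> bad n s1" "(a, b) \<in> (Es n s1)\<^sup>*" "\<not> bad n s2" "(b, c) \<in> (Es n s2)\<^sup>*"
        unfolding t(2) by blast
      define s where "s = max s1 s2"
      have "\<not> bad n s" unfolding s_def using s by (simp add: max_def)
      moreover have "(a, b) \<in> (Es n s)\<^sup>*" using s(2) rtrancl_mono[OF Es_mono[of s1 s]] unfolding s_def by auto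
      moreover have "(b, c) \<in> (Es n s)\<^sup>*" using s(4) rtrancl_mono[OF Es_mono[of s2 s]] unfolding s_def by auto
      ultimately show "(a, c) \<in> V (t n)" unfolding t(2) by (blast intro: rtrancl_trans)
    qed
    have antisym: "antisym (V (t n))"
    proof (rule antisymI)
      fix a b assume "(a, b) \<in> V (t n)" "(b, a) \<in> V (t n)"
      then obtain s1 s2 where s: "\<not> bad n s1" "(a, b) \<in> (Es n s1)\<^sup>*" "\<not> bad n s2" "(b, a) \<in> (Es n s2)\<^sup>*"
        unfolding t(2) by blast
      define s where "s = max s1 s2"
      have "\<not> bad n s" unfolding s_def using s by (simp add: max_def)
      moreover have "(a, b) \<in> (Es n s)\<^sup>*" using s(2) rtrancl_mono[OF Es_mono[of s1 s]] unfolding s_def by auto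
      moreover have "(b, a) \<in> (Es n s)\<^sup>*" using s(4) rtrancl_mono[OF Es_mono[of s2 s]] unfolding s_def by auto
      ultimately show "a = b" using bad_sem by blast
    qed
    show "V (t n) \<in> ceO" unfolding ceO_def ce_rel_def partial_order_on_def preorder_on_def
      using refl trans antisym by auto
  next
    fix n assume "V n \<in> ceO"
    then have po: "refl_on UNIV (V n)" "trans (V n)" "antisym (V n)"
      unfolding ceO_def partial_order_on_def preorder_on_def by auto
    have sub: "(Es n s)\<^sup>* \<subseteq> V n" for s
      using rtrancl_mono[OF Es_sub_V[of n s]] rtrancl_refl_trans[OF po(1,2)] by simp
    have nb: "\<not> bad n s" for s
    proof
      assume "bad n s"
      then obtain a b where "a \<noteq> b" "(a, b) \<in> (Es n s)\<^sup>*" "(b, a) \<in> (Es n s)\<^sup>*" using bad_sem by blast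
      then show False using sub po(3) unfolding antisym_def by blast
    qed
    show "V n = V (t n)"
    proof
      show "V n \<subseteq> V (t n)"
      proof
        fix p assume "p \<in> V n"
        then obtain a b where p: "p = (a, b)" "(a, b) \<in> V n" by (cases p) auto
        then obtain s where "(a, b) \<in> Es n s" using V_sub_Es by blast
        then show "p \<in> V (t n)" unfolding t(2) using p(1) nb by blast
      qed
      show "V (t n) \<subseteq> V n" unfolding t(2) using sub by blast
    qed
  qed
qed

end
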